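(* Assume $D(0)<\infty$. Then for all integers $x\ge1$, $$\mathbb P(x\in C_w)=\frac{1}{p_xD(x-1)},$$ and for all integers $1\le x<y$, $$\mathbb P(x\in C_w,\ y\in C_w)=\frac{1}{p_xD(x-1,y)}\cdot\frac{1}{1-\frac{q_yD(x-1,y-1)}{D(x-1,y)}}\cdot\frac1{D(y-1)}.$$
   Context: Let $p_0=1$, $q_0=0$, and for $k\ge1$ let $p_k,q_k>0$ with $p_k+q_k=1$. Let $X=(X_k)_{k\ge0}$ be the Markov chain on $\mathbb Z_+$ with $X_0=0$, $\mathbb P(X_{k+1}=n+1\mid X_k=n)=p_n$, $\mathbb P(X_{k+1}=n-1\mid X_k=n)=q_n$. Let $\rho_k=q_k/p_k$ for $k\ge1$. For integers $n\ge m\ge0$ let $D(m,n)=0$ if $n=m$, $D(m,n)=1$ if $n=m+1$, and $D(m,n)=1+\sum_{j=1}^{n-m-1}\rho_{m+1}\cdots\rho_{m+j}$ if $n\ge m+2$; let $D(m)=\lim_{n\to\infty}D(m,n)$. A site $R$ is a weak cutpoint if for some $k$, $X_k=R$, $X_i\le R$ for $0\le i\le k-1$ and $X_i\ge R$ for all $i\ge k+1$; $C_w$ is the set of weak cutpoints. *)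

theory Defs
  imports "HOL-Probability.Probability"
begin

text \<open>Birth-death chain on the nonnegative integers. p n is the probability of
stepping up from n; q n = 1 - p n is the probability of stepping down.\<close>

definition qq :: "(nat \<Rightarrow> real) \<Rightarrow> nat \<Rightarrow> real" where
  "qq p n = 1 - p n"

definition rho :: "(nat \<Rightarrow> real) \<Rightarrow> nat \<Rightarrow> real" where
  "rho p k = qq p k / p k"

definition trans_prob :: "(nat \<Rightarrow> real) \<Rightarrow> nat \<Rightarrow> nat \<Rightarrow> real" where
  "trans_prob p n m =
     (if m = Suc n then p n else if 0 < n \<and> m = n - 1 then qq p n else 0)"

definition path_prob :: "(nat \<Rightarrow> real) \<Rightarrow> nat list \<Rightarrow> real" where
  "path_prob p xs = (\<Prod>i < length xs - 1. trans_prob p (xs ! i) (xs ! Suc i))"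

text \<open>X is the Markov chain started at 0: its finite-dimensional distributions
are those of the chain.\<close>
definition is_bd_chain :: "'a measure \<Rightarrow> (nat \<Rightarrow> 'a \<Rightarrow> nat) \<Rightarrow> (nat \<Rightarrow> real) \<Rightarrow> bool" where
  "is_bd_chain M X p \<longleftrightarrow>
     prob_space M \<and>
     (\<forall>k. X k \<in> measurable M (count_space UNIV)) \<and>
     (\<forall>xs. xs \<noteq> [] \<longrightarrow>
        measure M {\<omega> \<in> space M. \<forall>i < length xs. X i \<omega> = xs ! i}
          = (if xs ! 0 = 0 then path_prob p xs else 0))"

definition Dfin :: "(nat \<Rightarrow> real) \<Rightarrow> nat \<Rightarrow> nat \<Rightarrow> real" where
  "Dfin p m n =
     (if n = m then 0
      else 1 + (\<Sum>j = 1 .. n - m - 1. \<Prod>i = 1 .. j. rho p (m + i)))"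

definition Dinf :: "(nat \<Rightarrow> real) \<Rightarrow> nat \<Rightarrow> real" where
  "Dinf p m = lim (\<lambda>n. Dfin p m n)"

definition weak_cutpoint :: "(nat \<Rightarrow> 'a \<Rightarrow> nat) \<Rightarrow> nat \<Rightarrow> 'a \<Rightarrow> bool" where
  "weak_cutpoint X R \<omega> \<longleftrightarrow>
     (\<exists>k. X k \<omega> = R \<and> (\<forall>i < k. X i \<omega> \<le> R) \<and> (\<forall>i > k. X i \<omega> \<ge> R))"

end

theory Submission
  imports Defs
begin

definition wstep :: "nat \<Rightarrow> bool \<Rightarrow> nat" where
  "wstep a b = (if b then Suc a else a - 1)"
definition wst :: "(nat \<Rightarrow> real) \<Rightarrow> nat \<Rightarrow> bool \<Rightarrow> real" where
  "wst p a b = (if b then p a else if 0 < a then qq p a else 0)"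
definition wpos :: "nat \<Rightarrow> bool list \<Rightarrow> nat \<Rightarrow> nat" where
  "wpos a bs i = foldl wstep a (take i bs)"
fun wpw :: "(nat \<Rightarrow> real) \<Rightarrow> nat \<Rightarrow> bool list \<Rightarrow> real" where
  "wpw p a [] = 1"
| "wpw p a (b # bs) = wst p a b * wpw p (wstep a b) bs"
definition LL :: "nat \<Rightarrow> bool list set" where
  "LL n = {bs. length bs = n}"
definition WE :: "(nat \<Rightarrow> real) \<Rightarrow> nat \<Rightarrow> nat \<Rightarrow> ((nat \<Rightarrow> nat) \<Rightarrow> bool) \<Rightarrow> real" where
  "WE p n a \<Phi> = (\<Sum>bs\<in>LL n. wpw p a bs * (if \<Phi> (wpos a bs) then 1 else 0))"

lemma finite_LL[simp]: "finite (LL n)"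
  unfolding LL_def using finite_lists_length_eq[of "UNIV::bool set" n] by simp

lemma wpos_0[simp]: "wpos a bs 0 = a" by (simp add: wpos_def)
lemma wpos_Cons_Suc[simp]: "wpos a (b # bs) (Suc i) = wpos (wstep a b) bs i"
  by (simp add: wpos_def)
lemma wpos_append: "wpos a (b1 @ b2) i = wpos (wpos a b1 i) b2 (i - length b1)"
  by (simp add: wpos_def)
lemma wpos_Suc: "i < length bs \<Longrightarrow> wpos a bs (Suc i) = wstep (wpos a bs i) (bs ! i)"
  by (simp add: wpos_def take_Suc_conv_app_nth)
lemma wpos_beyond: "length bs \<le> i \<Longrightarrow> wpos a bs i = wpos a bs (length bs)"
  by (simp add: wpos_def)

lemma wpw_append: "wpw p a (b1 @ b2) = wpw p a b1 * wpw p (wpos a b1 (length b1)) b2"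
  by (induction b1 arbitrary: a) (auto simp: wpos_def)

lemma wpw_prod: "wpw p a bs = (\<Prod>i<length bs. wst p (wpos a bs i) (bs ! i))"
proof (induction bs arbitrary: a)
  case Nil then show ?case by simp
next
  case (Cons b bs)
  have "(\<Prod>i<length (b#bs). wst p (wpos a (b#bs) i) ((b#bs) ! i))
     = wst p a b * (\<Prod>i<length bs. wst p (wpos (wstep a b) bs i) (bs ! i))"
    by (simp only: length_Cons prod.lessThan_Suc_shift) simp
  then show ?case by (simp add: Cons)
qed

lemma sum_LL_add: "(\<Sum>bs\<in>LL (n + m). g bs) = (\<Sum>b1\<in>LL n. \<Sum>b2\<in>LL m. g (b1 @ b2))"
proof -
  have inj: "inj_on (\<lambda>(b1, b2). b1 @ b2) (LL n \<times> LL m)"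
    by (auto simp: inj_on_def LL_def)
  have img: "(\<lambda>(b1, b2). b1 @ b2) ` (LL n \<times> LL m) = LL (n + m)"
  proof
    show "(\<lambda>(b1, b2). b1 @ b2) ` (LL n \<times> LL m) \<subseteq> LL (n + m)" by (auto simp: LL_def)
    show "LL (n + m) \<subseteq> (\<lambda>(b1, b2). b1 @ b2) ` (LL n \<times> LL m)"
    proof
      fix bs assume "bs \<in> LL (n + m)"
      then have "(take n bs, drop n bs) \<in> LL n \<times> LL m" by (auto simp: LL_def)
      then show "bs \<in> (\<lambda>(b1, b2). b1 @ b2) ` (LL n \<times> LL m)"
        by (metis (no_types, lifting) append_take_drop_id case_prod_conv image_eqI)
    qed
  qed
  have "(\<Sum>bs\<in>LL (n + m). g bs) = (\<Sum>x\<in>LL n \<times> LL m. g ((\<lambda>(b1, b2). b1 @ b2) x))"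
    using sum.reindex[OF inj, of g] img by simp
  also have "\<dots> = (\<Sum>b1\<in>LL n. \<Sum>b2\<in>LL m. g (b1 @ b2))"
    by (simp add: sum.cartesian_product case_prod_beta)
  finally show ?thesis .
qed

lemma LL_1: "LL (Suc 0) = {[True], [False]}"
  by (auto simp: LL_def length_Suc_conv)

lemma sum_LL_Suc: "(\<Sum>bs\<in>LL (Suc n). g bs) = (\<Sum>bs\<in>LL n. g (True # bs) + g (False # bs))"
proof -
  have "(\<Sum>bs\<in>LL (1 + n). g bs) = (\<Sum>b1\<in>LL 1. \<Sum>b2\<in>LL n. g (b1 @ b2))" by (rule sum_LL_add)
  then show ?thesis by (simp add: LL_1 sum.distrib[symmetric])
qed



fun WK :: "(nat \<Rightarrow> real) \<Rightarrow> nat set \<Rightarrow> nat set \<Rightarrow> nat \<Rightarrow> nat \<Rightarrow> real" where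
  "WK p I J 0 a = (if a \<in> I \<and> a \<in> J then 1 else 0)"
| "WK p I J (Suc n) a = (if a \<in> I then wst p a True * WK p I J n (Suc a) + wst p a False * WK p I J n (a - 1) else 0)"

fun WEx :: "(nat \<Rightarrow> real) \<Rightarrow> nat set \<Rightarrow> (nat \<Rightarrow> real) \<Rightarrow> nat \<Rightarrow> nat \<Rightarrow> real" where
  "WEx p I g 0 a = g a"
| "WEx p I g (Suc n) a = (if a \<in> I then wst p a True * WEx p I g n (Suc a) + wst p a False * WEx p I g n (a - 1) else g a)"

lemma all_le_Suc_shift: "(\<forall>i\<le>Suc n. P i) \<longleftrightarrow> P 0 \<and> (\<forall>i\<le>n. P (Suc i))"
  by (metis Suc_le_D Suc_le_mono le0 not0_implies_Suc)

locale bdp =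
  fixes p :: "nat \<Rightarrow> real"
  assumes p0: "p 0 = 1"
    and ppos: "\<And>k. k \<ge> 1 \<Longrightarrow> 0 < p k \<and> p k < 1"
begin

lemma p_pos: "0 < p k"
  using p0 ppos[of k] by (cases k) auto

lemma p_le1: "p k \<le> 1"
  using p0 ppos[of k] by (cases k) auto

lemma wst_nonneg: "0 \<le> wst p a b"
  using p_pos[of a] p_le1[of a] by (auto simp: wst_def qq_def)

lemma wst_sum: "wst p a True + wst p a False = 1"
  using p0 by (cases a) (auto simp: wst_def qq_def)

lemma wpw_nonneg: "0 \<le> wpw p a bs"
  by (induction bs arbitrary: a) (auto intro!: mult_nonneg_nonneg wst_nonneg)

lemma sum_wpw: "(\<Sum>bs\<in>LL n. wpw p a bs) = 1"
proof (induction n arbitrary: a)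
  case 0
  have "LL 0 = {[]}" by (auto simp: LL_def)
  then show ?case by simp
next
  case (Suc n)
  have "(\<Sum>bs\<in>LL (Suc n). wpw p a bs)
      = (\<Sum>bs\<in>LL n. wst p a True * wpw p (Suc a) bs + wst p a False * wpw p (a - 1) bs)"
    by (simp add: sum_LL_Suc wstep_def)
  also have "\<dots> = wst p a True + wst p a False"
    by (simp add: sum.distrib sum_distrib_left[symmetric] Suc)
  finally show ?case using wst_sum by simp
qed

lemma WE_split:
  assumes dep: "\<And>f g. (\<forall>i\<le>n. f i = g i) \<Longrightarrow> \<Phi>1 f = \<Phi>1 g"
  shows "WE p (n + m) a (\<lambda>f. \<Phi>1 f \<and> \<Phi>2 (\<lambda>i. f (n + i)))
       = (\<Sum>b1\<in>LL n. wpw p a b1 * (if \<Phi>1 (wpos a b1) then 1 else 0) * WE p m (wpos a b1 n) \<Phi>2)"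
proof -
  have eq: "wpw p a (b1 @ b2) * (if \<Phi>1 (wpos a (b1 @ b2)) \<and> \<Phi>2 (\<lambda>i. wpos a (b1 @ b2) (n + i)) then 1 else 0)
      = wpw p a b1 * (if \<Phi>1 (wpos a b1) then 1 else 0) *
        (wpw p (wpos a b1 n) b2 * (if \<Phi>2 (wpos (wpos a b1 n) b2) then 1 else 0))"
    if "b1 \<in> LL n" for b1 b2
  proof -
    have len: "length b1 = n" using that by (simp add: LL_def)
    have "\<Phi>1 (wpos a (b1 @ b2)) = \<Phi>1 (wpos a b1)"
      by (rule dep) (simp add: wpos_append len)
    moreover have "(\<lambda>i. wpos a (b1 @ b2) (n + i)) = wpos (wpos a b1 n) b2"
      by (rule ext) (simp add: wpos_append len wpos_beyond[of b1 "n + _"])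
    ultimately show ?thesis by (simp add: wpw_append len)
  qed
  show ?thesis
    unfolding WE_def sum_LL_add
    by (simp add: eq sum_distrib_left)
qed

lemma WE_split_const:
  assumes dep: "\<And>f g. (\<forall>i\<le>n. f i = g i) \<Longrightarrow> \<Phi>1 f = \<Phi>1 g"
    and c: "\<And>f. \<Phi>1 f \<Longrightarrow> f n = c"
  shows "WE p (n + m) a (\<lambda>f. \<Phi>1 f \<and> \<Phi>2 (\<lambda>i. f (n + i))) = WE p n a \<Phi>1 * WE p m c \<Phi>2"
proof -
  have "WE p (n + m) a (\<lambda>f. \<Phi>1 f \<and> \<Phi>2 (\<lambda>i. f (n + i)))
       = (\<Sum>b1\<in>LL n. wpw p a b1 * (if \<Phi>1 (wpos a b1) then 1 else 0) * WE p m (wpos a b1 n) \<Phi>2)"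
    by (rule WE_split[OF dep])
  also have "\<dots> = (\<Sum>b1\<in>LL n. wpw p a b1 * (if \<Phi>1 (wpos a b1) then 1 else 0) * WE p m c \<Phi>2)"
    by (rule sum.cong) (auto dest: c)
  finally show ?thesis by (simp add: WE_def sum_distrib_right)
qed

lemma WE_K: "WE p n a (\<lambda>f. (\<forall>i\<le>n. f i \<in> I) \<and> f n \<in> J) = WK p I J n a"
proof (induction n arbitrary: a)
  case 0
  have "LL 0 = {[]}" by (auto simp: LL_def)
  then show ?case by (simp add: WE_def)
next
  case (Suc n)
  have pr: "(\<lambda>f. (\<forall>i\<le>Suc n. f i \<in> I) \<and> f (Suc n) \<in> J)
     = (\<lambda>f. f 0 \<in> I \<and> (\<lambda>g. (\<forall>i\<le>n. g i \<in> I) \<and> g n \<in> J) (\<lambda>i. f (1 + i)))"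
    by (rule ext) (simp add: all_le_Suc_shift)
  have "WE p (1 + n) a (\<lambda>f. f 0 \<in> I \<and> (\<lambda>g. (\<forall>i\<le>n. g i \<in> I) \<and> g n \<in> J) (\<lambda>i. f (1 + i)))
     = (\<Sum>b1\<in>LL 1. wpw p a b1 * (if wpos a b1 0 \<in> I then 1 else 0) *
          WE p n (wpos a b1 1) (\<lambda>g. (\<forall>i\<le>n. g i \<in> I) \<and> g n \<in> J))"
    by (rule WE_split) simp
  also have "\<dots> = WK p I J (Suc n) a"
    by (simp add: LL_1 Suc wpos_def wstep_def)
  finally show ?case using pr by simp
qed

end


fun dd :: "(nat \<Rightarrow> real) \<Rightarrow> nat \<Rightarrow> real" where
  "dd p 0 = 1"
| "dd p (Suc a) = (1 + qq p (Suc a) * dd p a) / p (Suc a)"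

definition gg :: "(nat \<Rightarrow> real) \<Rightarrow> nat \<Rightarrow> real" where
  "gg p a = (\<Sum>i<a. dd p i)"

lemma WK_Suc_in: "a \<in> I \<Longrightarrow> WK p I J (Suc n) a = wst p a True * WK p I J n (Suc a) + wst p a False * WK p I J n (a - 1)"
  by simp
lemma WK_Suc_out: "a \<notin> I \<Longrightarrow> WK p I J (Suc n) a = 0"
  by simp
lemma WEx_Suc_in: "a \<in> I \<Longrightarrow> WEx p I g (Suc n) a = wst p a True * WEx p I g n (Suc a) + wst p a False * WEx p I g n (a - 1)"
  by simp
lemma WEx_Suc_out: "a \<notin> I \<Longrightarrow> WEx p I g (Suc n) a = g a"
  by simp
declare WK.simps(2)[simp del] WEx.simps(2)[simp del]

context bdp begin

lemma WK_nonneg: "0 \<le> WK p I J n a"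
  by (induction n arbitrary: a) (auto simp: WK.simps(2) intro!: add_nonneg_nonneg mult_nonneg_nonneg wst_nonneg)

lemma WK_le1: "WK p I J n a \<le> 1"
proof (induction n arbitrary: a)
  case (Suc n)
  have "wst p a True * WK p I J n (Suc a) + wst p a False * WK p I J n (a - 1)
      \<le> wst p a True * 1 + wst p a False * 1"
    by (intro add_mono mult_left_mono Suc wst_nonneg)
  then show ?case using wst_sum by (cases "a \<in> I") (simp_all add: WK_Suc_in WK_Suc_out)
qed simp

lemma WK_mono_I: "I \<subseteq> I' \<Longrightarrow> WK p I J n a \<le> WK p I' J n a"
proof (induction n arbitrary: a)
  case (Suc n)
  show ?case
  proof (cases "a \<in> I")
    case True
    then have "a \<in> I'" using Suc.prems by auto
    have "wst p a True * WK p I J n (Suc a) + wst p a False * WK p I J n (a - 1)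
        \<le> wst p a True * WK p I' J n (Suc a) + wst p a False * WK p I' J n (a - 1)"
      by (intro add_mono mult_left_mono Suc wst_nonneg)
    then show ?thesis using True \<open>a \<in> I'\<close> by (simp add: WK_Suc_in)
  qed (simp add: WK_Suc_out WK_nonneg)
qed auto

lemma WK_decr: "WK p I UNIV (Suc n) a \<le> WK p I UNIV n a"
proof (induction n arbitrary: a)
  case 0
  have "wst p a True * WK p I UNIV 0 (Suc a) + wst p a False * WK p I UNIV 0 (a - 1)
      \<le> wst p a True * 1 + wst p a False * 1"
    by (intro add_mono mult_left_mono WK_le1 wst_nonneg)
  then show ?case using wst_sum by (cases "a \<in> I") (simp_all add: WK_Suc_in WK_Suc_out)
next
  case (Suc n)
  show ?case
  proof (cases "a \<in> I")
    case True
    have "wst p a True * WK p I UNIV (Suc n) (Suc a) + wst p a False * WK p I UNIV (Suc n) (a - 1)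
        \<le> wst p a True * WK p I UNIV n (Suc a) + wst p a False * WK p I UNIV n (a - 1)"
      by (intro add_mono mult_left_mono Suc wst_nonneg)
    then show ?thesis using True by (simp only: WK_Suc_in)
  qed (simp add: WK_Suc_out)
qed

lemma WK_decr': "m \<le> n \<Longrightarrow> WK p I UNIV n a \<le> WK p I UNIV m a"
  by (induction n rule: dec_induct) (auto intro: order_trans[OF WK_decr] simp del: WK.simps)

lemma WK_sum_singletons:
  assumes "finite I"
  shows "(\<Sum>b\<in>I. WK p I {b} n a) = WK p I UNIV n a"
proof (induction n arbitrary: a)
  case 0
  show ?case using assms by (simp add: sum.If_cases)
next
  case (Suc n)
  show ?case
    by (cases "a \<in> I") (simp_all add: WK_Suc_in WK_Suc_out sum.distrib sum_distrib_left[symmetric] Suc)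
qed

lemma WEx_harm:
  assumes "\<And>a. a \<in> I \<Longrightarrow> wst p a True * g (Suc a) + wst p a False * g (a - 1) = g a"
  shows "WEx p I g n a = g a"
proof (induction n arbitrary: a)
  case (Suc n)
  show ?case using assms[of a] by (cases "a \<in> I") (simp_all add: WEx_Suc_in WEx_Suc_out Suc)
qed simp

lemma WEx_le_K:
  assumes "\<And>a. a \<in> I \<Longrightarrow> g a \<le> c" "\<And>a. a \<notin> I \<Longrightarrow> g a \<le> 0" "0 \<le> c"
  shows "WEx p I g n a \<le> c * WK p I UNIV n a"
proof (induction n arbitrary: a)
  case 0
  then show ?case using assms by auto
next
  case (Suc n)
  show ?case
  proof (cases "a \<in> I")
    case True
    have "wst p a True * WEx p I g n (Suc a) + wst p a False * WEx p I g n (a - 1)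
        \<le> wst p a True * (c * WK p I UNIV n (Suc a)) + wst p a False * (c * WK p I UNIV n (a - 1))"
      by (intro add_mono mult_left_mono Suc wst_nonneg)
    then show ?thesis using True by (simp add: algebra_simps WEx_Suc_in WK_Suc_in)
  qed (use assms in \<open>auto simp: WEx_Suc_out WK_Suc_out\<close>)
qed

lemma WEx_mono:
  assumes "\<And>a. g1 a \<le> g2 a"
  shows "WEx p I g1 n a \<le> WEx p I g2 n a"
proof (induction n arbitrary: a)
  case (Suc n)
  show ?case
    by (cases "a \<in> I") (auto simp: assms WEx_Suc_in WEx_Suc_out intro!: add_mono mult_left_mono wst_nonneg Suc)
qed (simp add: assms)

lemma WEx_scale: "WEx p I (\<lambda>a. c * g a) n a = c * WEx p I g n a"
  by (induction n arbitrary: a) (auto simp: algebra_simps WEx.simps(2))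

lemma WEx_nonneg: "(\<And>a. 0 \<le> g a) \<Longrightarrow> 0 \<le> WEx p I g n a"
  by (induction n arbitrary: a) (auto simp: WEx.simps(2) intro!: add_nonneg_nonneg mult_nonneg_nonneg wst_nonneg)

lemma WK_le_exit:
  assumes "x \<le> Suc hi"
  shows "WK p {x..} UNIV n a \<le> WEx p {x..hi} (\<lambda>b. if hi < b then 1 else 0) n a + WK p {x..hi} UNIV n a"
proof (induction n arbitrary: a)
  case 0
  then show ?case by auto
next
  case (Suc n)
  show ?case
  proof (cases "a < x")
    case True then show ?thesis
      by (auto simp: WK_Suc_out intro!: add_nonneg_nonneg WEx_nonneg WK_nonneg)
  next
    case False
    show ?thesis
    proof (cases "a \<le> hi")
      case True
      have "wst p a True * WK p {x..} UNIV n (Suc a) + wst p a False * WK p {x..} UNIV n (a - 1)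
        \<le> wst p a True * (WEx p {x..hi} (\<lambda>b. if hi < b then 1 else 0) n (Suc a) + WK p {x..hi} UNIV n (Suc a))
          + wst p a False * (WEx p {x..hi} (\<lambda>b. if hi < b then 1 else 0) n (a - 1) + WK p {x..hi} UNIV n (a - 1))"
        by (intro add_mono mult_left_mono Suc wst_nonneg)
      then show ?thesis using True False by (simp add: algebra_simps WK_Suc_in WEx_Suc_in)
    next
      case F2: False
      then show ?thesis using False WK_le1[of "{x..}" UNIV "Suc n" a] by (simp add: WK_Suc_out WEx_Suc_out)
    qed
  qed
qed

text \<open>Lyapunov function\<close>

lemma dd_pos: "0 < dd p a"
proof (induction a)
  case (Suc a)
  have "0 \<le> qq p (Suc a)" using p_le1 by (simp add: qq_def)
  then show ?case using Suc p_pos[of "Suc a"]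
    by (auto intro!: divide_pos_pos add_pos_nonneg mult_nonneg_nonneg)
qed simp

lemma gg_mono: "a \<le> b \<Longrightarrow> gg p a \<le> gg p b"
  unfolding gg_def by (rule sum_mono2) (auto intro: less_imp_le dd_pos)

lemma gg_Suc: "gg p (Suc a) = gg p a + dd p a"
  by (simp add: gg_def)

lemma gg_drift: "wst p a True * gg p (Suc a) + wst p a False * gg p (a - 1) \<ge> gg p a + 1"
proof (cases a)
  case 0
  then show ?thesis using p0 by (simp add: wst_def gg_def)
next
  case (Suc b)
  have pa: "0 < p a" by (rule p_pos)
  have ga: "gg p a = gg p b + dd p b" using Suc gg_Suc by simp
  have "dd p a * p a = 1 + qq p a * dd p b" using Suc pa by simp
  then have "wst p a True * gg p (Suc a) + wst p a False * gg p (a - 1)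
     = p a * (gg p a + dd p a) + qq p a * (gg p a - dd p b)"
    using Suc ga by (simp add: wst_def gg_Suc)
  also have "\<dots> = (p a + qq p a) * gg p a + (dd p a * p a - qq p a * dd p b)"
    by (simp add: algebra_simps)
  also have "\<dots> = gg p a + 1"
    using \<open>dd p a * p a = 1 + qq p a * dd p b\<close> by (simp add: qq_def)
  finally show ?thesis by simp
qed

lemma lyap1:
  "a \<le> Suc h \<Longrightarrow> gg p a + (\<Sum>i<n. WK p {..h} UNIV i a) \<le> WEx p {..h} (gg p) n a"
proof (induction n arbitrary: a)
  case 0
  then show ?case by simp
next
  case (Suc n)
  show ?case
  proof (cases "a \<le> h")
    case True
    have "gg p a + (\<Sum>i<Suc n. WK p {..h} UNIV i a)
        = gg p a + 1 + (\<Sum>i<n. WK p {..h} UNIV (Suc i) a)"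
      using True by (simp only: sum.lessThan_Suc_shift) simp
    also have "\<dots> = gg p a + 1 + (wst p a True * (\<Sum>i<n. WK p {..h} UNIV i (Suc a))
          + wst p a False * (\<Sum>i<n. WK p {..h} UNIV i (a - 1)))"
      using True by (simp add: sum.distrib sum_distrib_left WK_Suc_in)
    also have "\<dots> \<le> wst p a True * gg p (Suc a) + wst p a False * gg p (a - 1) + (wst p a True * (\<Sum>i<n. WK p {..h} UNIV i (Suc a))
          + wst p a False * (\<Sum>i<n. WK p {..h} UNIV i (a - 1)))"
      using gg_drift[of a] by simp
    also have "\<dots> = wst p a True * (gg p (Suc a) + (\<Sum>i<n. WK p {..h} UNIV i (Suc a)))
         + wst p a False * (gg p (a - 1) + (\<Sum>i<n. WK p {..h} UNIV i (a - 1)))"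
      by (simp add: algebra_simps)
    also have "\<dots> \<le> wst p a True * WEx p {..h} (gg p) n (Suc a) + wst p a False * WEx p {..h} (gg p) n (a - 1)"
      using True by (intro add_mono mult_left_mono Suc wst_nonneg) auto
    finally show ?thesis using True by (simp add: WEx_Suc_in)
  next
    case False
    then have "\<forall>i. WK p {..h} UNIV i a = 0" by (intro allI, case_tac i) (auto simp: WK_Suc_out)
    then show ?thesis using False by (simp add: WEx_Suc_out)
  qed
qed

lemma lyap2: "a \<le> Suc h \<Longrightarrow> WEx p {..h} (gg p) n a \<le> gg p (Suc h)"
proof (induction n arbitrary: a)
  case 0
  then show ?case by (simp add: gg_mono)
next
  case (Suc n)
  show ?case
  proof (cases "a \<le> h")
    case True
    have "wst p a True * WEx p {..h} (gg p) n (Suc a) + wst p a False * WEx p {..h} (gg p) n (a - 1)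
        \<le> wst p a True * gg p (Suc h) + wst p a False * gg p (Suc h)"
      using True by (intro add_mono mult_left_mono Suc wst_nonneg) auto
    moreover have "wst p a True * gg p (Suc h) + wst p a False * gg p (Suc h) = gg p (Suc h)"
      using wst_sum[of a] by (metis distrib_right mult_1)
    ultimately show ?thesis using True by (simp add: WEx_Suc_in)
  next
    case False
    then show ?thesis using Suc.prems by (simp add: gg_mono WEx_Suc_out)
  qed
qed

lemma T_bound: "real n * WK p {..h} UNIV n a \<le> gg p (Suc h)"
proof (cases "a \<le> Suc h")
  case True
  have "real n * WK p {..h} UNIV n a = (\<Sum>i<n. WK p {..h} UNIV n a)" by simp
  also have "\<dots> \<le> (\<Sum>i<n. WK p {..h} UNIV i a)"
    by (intro sum_mono WK_decr') auto
  also have "\<dots> \<le> gg p (Suc h) - gg p a"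
    using lyap1[OF True, of n] lyap2[OF True, of n] by simp
  also have "\<dots> \<le> gg p (Suc h)"
    using gg_def dd_pos by (simp add: gg_def sum_nonneg less_imp_le)
  finally show ?thesis .
next
  case False
  then have "WK p {..h} UNIV n a = 0" by (cases n) (auto simp: WK_Suc_out)
  moreover have "0 \<le> gg p (Suc h)" by (simp add: gg_def sum_nonneg less_imp_le dd_pos)
  ultimately show ?thesis by simp
qed

lemma T_tendsto: "(\<lambda>n. WK p {..h} UNIV n a) \<longlonglongrightarrow> 0"
proof (rule tendsto_sandwich[where f="\<lambda>n. 0" and h="\<lambda>n. gg p (Suc h) * (1 / real n)"])
  show "\<forall>\<^sub>F n in sequentially. 0 \<le> WK p {..h} UNIV n a" by (simp add: WK_nonneg)
  show "\<forall>\<^sub>F n in sequentially. WK p {..h} UNIV n a \<le> gg p (Suc h) * (1 / real n)"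
    using eventually_gt_at_top[of 0]
  proof eventually_elim
    case (elim n)
    then show ?case using T_bound[of n h a] by (simp add: field_simps)
  qed
  show "(\<lambda>n. 0) \<longlonglongrightarrow> (0::real)" by simp
  show "(\<lambda>n. gg p (Suc h) * (1 / real n)) \<longlonglongrightarrow> 0"
    using tendsto_mult_right[OF lim_inverse_n', of "gg p (Suc h)"] by simp
qed

end


definition ww :: "(nat \<Rightarrow> real) \<Rightarrow> nat \<Rightarrow> real" where
  "ww p k = (\<Prod>i\<in>{1..k}. rho p i)"
definition FF :: "(nat \<Rightarrow> real) \<Rightarrow> nat \<Rightarrow> nat \<Rightarrow> real" where
  "FF p m n = (\<Sum>j<n - m. ww p (m + j) / ww p m)"

context bdp begin

lemma rho_pos: "1 \<le> k \<Longrightarrow> 0 < rho p k"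
  using ppos[of k] by (simp add: rho_def qq_def)

lemma ww_pos: "0 < ww p k"
  unfolding ww_def by (rule prod_pos) (auto intro: rho_pos)

lemma ww_Suc: "ww p (Suc k) = ww p k * rho p (Suc k)"
  unfolding ww_def by (simp add: atLeastAtMostSuc_conv mult.commute)

lemma ww_harm: "p (Suc k) * ww p (Suc k) = qq p (Suc k) * ww p k"
  using p_pos[of "Suc k"] by (simp add: ww_Suc rho_def)

lemma ww_add: "ww p (m + j) = ww p m * (\<Prod>i\<in>{1..j}. rho p (m + i))"
proof (induction j)
  case (Suc j)
  show ?case using Suc by (simp add: ww_Suc atLeastAtMostSuc_conv)
qed (simp add: ww_def)

lemma FF_Suc: "m \<le> n \<Longrightarrow> FF p m (Suc n) = FF p m n + ww p n / ww p m"
  unfolding FF_def by (simp add: Suc_diff_le)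

lemma FF_le: "n \<le> m \<Longrightarrow> FF p m n = 0"
  unfolding FF_def by simp

lemma FF_nonneg: "0 \<le> FF p m n"
  unfolding FF_def by (intro sum_nonneg divide_nonneg_pos less_imp_le ww_pos)

lemma FF_mono: "n \<le> n' \<Longrightarrow> FF p m n \<le> FF p m n'"
  unfolding FF_def by (rule sum_mono2) (auto intro: divide_nonneg_pos less_imp_le ww_pos)

lemma FF_Suc_m: "FF p m (Suc m) = 1"
  unfolding FF_def using ww_pos[of m] by simp

lemma FF_harm:
  assumes "Suc m \<le> a"
  shows "wst p a True * FF p m (Suc a) + wst p a False * FF p m (a - 1) = FF p m a"
proof -
  obtain b where b: "a = Suc b" "m \<le> b" using assms by (cases a) auto
  have wm: "0 < ww p m" by (rule ww_pos)
  have e1: "FF p m (Suc a) = FF p m a + ww p a / ww p m" using assms by (simp add: FF_Suc)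
  have e2: "FF p m a = FF p m b + ww p b / ww p m" using b by (simp add: FF_Suc)
  have "wst p a True * FF p m (Suc a) + wst p a False * FF p m (a - 1)
      = p a * (FF p m a + ww p a / ww p m) + qq p a * (FF p m a - ww p b / ww p m)"
    using b e1 e2 by (simp add: wst_def)
  also have "\<dots> = (p a + qq p a) * FF p m a + (p a * ww p a - qq p a * ww p b) / ww p m"
    by (simp add: algebra_simps diff_divide_distrib)
  also have "\<dots> = FF p m a" using ww_harm[of b] b by (simp add: qq_def)
  finally show ?thesis .
qed

lemma Dfin_FF:
  assumes "m \<le> n" shows "Dfin p m n = FF p m n"
proof (cases "n = m")
  case True then show ?thesis by (simp add: Dfin_def FF_def)
next
  case False
  then obtain t where t: "n - m = Suc t" using assms by (cases "n - m") auto
  have "FF p m n = (\<Sum>j<Suc t. ww p (m + j) / ww p m)" by (simp add: FF_def t)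
  also have "\<dots> = 1 + (\<Sum>j<t. ww p (m + Suc j) / ww p m)"
    using ww_pos[of m] by (simp only: sum.lessThan_Suc_shift) simp
  also have "\<dots> = 1 + (\<Sum>k<t. \<Prod>i\<in>{1..Suc k}. rho p (m + i))"
  proof -
    have "ww p (m + Suc k) / ww p m = (\<Prod>i\<in>{1..Suc k}. rho p (m + i))" for k
      using ww_add[of m "Suc k"] ww_pos[of m] by simp
    then show ?thesis by simp
  qed
  also have "\<dots> = 1 + (\<Sum>j = 1..n - m - 1. \<Prod>i = 1..j. rho p (m + i))"
    by (simp add: t sum.atLeast1_atMost_eq)
  finally show ?thesis using False by (simp add: Dfin_def)
qed

lemma sum_split_add: "(\<Sum>k<m + t. f k) = (\<Sum>k<m. f k) + (\<Sum>j<t. f (m + j))"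
  for f :: "nat \<Rightarrow> real"
  by (induction t) simp_all

lemma FF_alt: "FF p m (m + t) = ((\<Sum>k<m + t. ww p k) - (\<Sum>k<m. ww p k)) / ww p m"
  unfolding FF_def sum_split_add by (simp add: sum_divide_distrib)

end

locale bdp2 = bdp +
  assumes D0fin: "convergent (\<lambda>n. Dfin p 0 n)"
begin

lemma ww0: "ww p 0 = 1" by (simp add: ww_def)

lemma summable_ww: "summable (ww p)"
proof -
  have "Dfin p 0 n = (\<Sum>k<n. ww p k)" for n
    using Dfin_FF[of 0 n] by (simp add: FF_def ww0)
  then show ?thesis using D0fin by (simp add: summable_iff_convergent)
qed

lemma FF_tendsto: "(\<lambda>n. FF p m n) \<longlonglongrightarrow> (suminf (ww p) - (\<Sum>k<m. ww p k)) / ww p m"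
proof -
  have "(\<lambda>t. ((\<Sum>k<t + m. ww p k) - (\<Sum>k<m. ww p k)) / ww p m) \<longlonglongrightarrow> (suminf (ww p) - (\<Sum>k<m. ww p k)) / ww p m"
  proof -
    have "(\<lambda>t. \<Sum>k<t + m. ww p k) \<longlonglongrightarrow> suminf (ww p)"
      using LIMSEQ_ignore_initial_segment[OF summable_LIMSEQ[OF summable_ww], of m] .
    from tendsto_divide[OF tendsto_diff[OF this tendsto_const] tendsto_const]
    show ?thesis using ww_pos[of m] by simp
  qed
  then have "(\<lambda>t. FF p m (t + m)) \<longlonglongrightarrow> (suminf (ww p) - (\<Sum>k<m. ww p k)) / ww p m"
  proof -
    have eq: "FF p m (t + m) = ((\<Sum>k<t + m. ww p k) - (\<Sum>k<m. ww p k)) / ww p m" for t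
      using FF_alt[of m t] by (simp add: add.commute)
    show ?thesis unfolding eq by fact
  qed
  then show ?thesis by (rule LIMSEQ_offset)
qed

lemma Dinf_eq: "Dinf p m = (suminf (ww p) - (\<Sum>k<m. ww p k)) / ww p m"
proof -
  have "(\<lambda>n. Dfin p m n) \<longlonglongrightarrow> (suminf (ww p) - (\<Sum>k<m. ww p k)) / ww p m"
    by (rule Lim_transform_eventually[OF FF_tendsto])
       (use eventually_ge_at_top[of m] in \<open>eventually_elim, simp add: Dfin_FF\<close>)
  then show ?thesis unfolding Dinf_def by (rule limI)
qed

lemma FF_tendsto_Dinf: "(\<lambda>n. FF p m n) \<longlonglongrightarrow> Dinf p m"
  using FF_tendsto Dinf_eq by simp

lemma FF_le_Dinf: "FF p m n \<le> Dinf p m"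
  by (rule incseq_le[OF _ FF_tendsto_Dinf]) (auto simp: incseq_def FF_mono)

lemma Dinf_ge1: "1 \<le> Dinf p m"
  using FF_le_Dinf[of m "Suc m"] FF_Suc_m by simp

lemma S_lim:
  assumes x1: "1 \<le> x" and xa: "x \<le> a"
  shows "(\<lambda>N. WK p {x..} UNIV N a) \<longlonglongrightarrow> FF p (x - 1) a / Dinf p (x - 1)"
proof -
  let ?m = "x - 1"
  let ?D = "Dinf p ?m"
  let ?S = "\<lambda>N. WK p {x..} UNIV N a"
  have Dpos: "0 < ?D" using Dinf_ge1[of ?m] by simp
  have harm: "\<And>b. b \<in> {x..} \<Longrightarrow> wst p b True * FF p ?m (Suc b) + wst p b False * FF p ?m (b - 1) = FF p ?m b"
    using x1 by (intro FF_harm) auto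
  have lower: "FF p ?m a / ?D \<le> ?S N" for N
  proof -
    have "WEx p {x..} (FF p ?m) N a \<le> ?D * ?S N"
      by (rule WEx_le_K) (use x1 Dpos in \<open>auto simp: FF_le_Dinf FF_le less_imp_le\<close>)
    moreover have "WEx p {x..} (FF p ?m) N a = FF p ?m a" by (rule WEx_harm) (rule harm)
    ultimately have "FF p ?m a \<le> ?D * ?S N" by simp
    then show ?thesis using Dpos by (simp add: divide_le_eq mult.commute)
  qed
  have dec: "decseq ?S" by (rule decseq_SucI) (rule WK_decr)
  obtain L where L: "?S \<longlonglongrightarrow> L" and Lle: "\<forall>i. L \<le> ?S i"
    using decseq_convergent[OF dec, of 0] WK_nonneg by blast
  have upper: "L \<le> FF p ?m a / FF p ?m (Suc h)" if ha: "a \<le> h" for h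
  proof -
    let ?J = "{x..h}"
    let ?e = "\<lambda>b. if h < b then 1 else (0::real)"
    have Fh: "0 < FF p ?m (Suc h)"
      using FF_mono[of "Suc ?m" "Suc h" ?m] FF_Suc_m[of ?m] x1 xa ha by simp
    have bound: "?S N \<le> FF p ?m a / FF p ?m (Suc h) + WK p {..h} UNIV N a" for N
    proof -
      have "FF p ?m (Suc h) * WEx p ?J ?e N a = WEx p ?J (\<lambda>b. FF p ?m (Suc h) * ?e b) N a"
        by (simp add: WEx_scale)
      also have "\<dots> \<le> WEx p ?J (FF p ?m) N a"
        by (rule WEx_mono) (auto intro: FF_mono FF_nonneg)
      also have "\<dots> = FF p ?m a"
        by (rule WEx_harm) (use harm in auto)
      finally have "WEx p ?J ?e N a \<le> FF p ?m a / FF p ?m (Suc h)"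
        using Fh by (simp add: le_divide_eq mult.commute)
      moreover have "?S N \<le> WEx p ?J ?e N a + WK p ?J UNIV N a"
        by (rule WK_le_exit) (use xa ha in auto)
      moreover have "WK p ?J UNIV N a \<le> WK p {..h} UNIV N a"
        by (rule WK_mono_I) auto
      ultimately show ?thesis by linarith
    qed
    have "(\<lambda>N. FF p ?m a / FF p ?m (Suc h) + WK p {..h} UNIV N a) \<longlonglongrightarrow> FF p ?m a / FF p ?m (Suc h) + 0"
      by (intro tendsto_intros T_tendsto)
    then show ?thesis using LIMSEQ_le[OF L _ ] bound by (metis (mono_tags, lifting) add_0_right)
  qed
  have "(\<lambda>h. FF p ?m a / FF p ?m (Suc h)) \<longlonglongrightarrow> FF p ?m a / ?D"
    using Dpos by (intro tendsto_intros) (auto intro: LIMSEQ_Suc[OF FF_tendsto_Dinf])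
  then have "L \<le> FF p ?m a / ?D"
    by (rule LIMSEQ_le_const) (use upper in \<open>auto intro: exI[of _ a]\<close>)
  moreover have "FF p ?m a / ?D \<le> L"
    by (rule LIMSEQ_le_const[OF L]) (use lower in auto)
  ultimately show ?thesis using L by simp
qed

end


context bdp begin

lemma U_mass: "WK p {..x} UNIV (Suc k) a = WK p {..x} UNIV k a - p x * WK p {..x} {x} k a"
proof (induction k arbitrary: a)
  case 0
  show ?case
  proof (cases "a \<le> x")
    case True
    have s: "wst p a True + wst p a False = 1" by (rule wst_sum)
    show ?thesis
    proof (cases "a = x")
      case True
      then show ?thesis using s by (simp add: WK_Suc_in wst_def)
    next
      case False
      then show ?thesis using s \<open>a \<le> x\<close> by (simp add: WK_Suc_in)
    qed
  qed (simp add: WK_Suc_out)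
next
  case (Suc k)
  show ?case
  proof (cases "a \<le> x")
    case True
    have O: "WK p {..x} UNIV (Suc (Suc k)) a = wst p a True * WK p {..x} UNIV (Suc k) (Suc a) + wst p a False * WK p {..x} UNIV (Suc k) (a - 1)"
      using True by (simp add: WK_Suc_in)
    have O2: "WK p {..x} UNIV (Suc k) a = wst p a True * WK p {..x} UNIV k (Suc a) + wst p a False * WK p {..x} UNIV k (a - 1)"
      using True by (simp add: WK_Suc_in)
    have O3: "WK p {..x} {x} (Suc k) a = wst p a True * WK p {..x} {x} k (Suc a) + wst p a False * WK p {..x} {x} k (a - 1)"
      using True by (simp add: WK_Suc_in)
    show ?thesis unfolding O O2 O3 Suc.IH[of "Suc a"] Suc.IH[of "a - 1"]
      by (simp add: algebra_simps)
  qed (simp add: WK_Suc_out)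
qed

lemma U_sums: "a \<le> x \<Longrightarrow> (\<lambda>k. p x * WK p {..x} {x} k a) sums 1"
proof -
  assume ax: "a \<le> x"
  have ps: "(\<Sum>k<n. p x * WK p {..x} {x} k a) = 1 - WK p {..x} UNIV n a" for n
  proof -
    have "(\<Sum>k<n. p x * WK p {..x} {x} k a) = (\<Sum>k<n. WK p {..x} UNIV k a - WK p {..x} UNIV (Suc k) a)"
      by (simp add: U_mass)
    also have "\<dots> = WK p {..x} UNIV 0 a - WK p {..x} UNIV n a"
      by (rule sum_lessThan_telescope')
    finally show ?thesis using ax by simp
  qed
  have "(\<lambda>n. 1 - WK p {..x} UNIV n a) \<longlonglongrightarrow> 1 - 0"
    by (intro tendsto_diff tendsto_const T_tendsto)
  then show ?thesis unfolding sums_def ps by simp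
qed

lemma Q_step:
  "WEx p {x..y} (\<lambda>b. if y < b then 1 else 0) (Suc n) a
     = WEx p {x..y} (\<lambda>b. if y < b then 1 else 0) n a + p y * WK p {x..y} {y} n a"
proof (induction n arbitrary: a)
  case 0
  show ?case
  proof (cases "a \<in> {x..y}")
    case True
    then have xa: "x \<le> a" "a \<le> y" by auto
    show ?thesis
    proof (cases "a = y")
      case True
      then show ?thesis using xa by (simp add: WEx_Suc_in wst_def)
    next
      case False
      then have "Suc a \<le> y" using xa by simp
      then show ?thesis using xa False by (simp add: WEx_Suc_in wst_def)
    qed
  qed (auto simp: WEx_Suc_out)
next
  case (Suc n)
  show ?case
  proof (cases "a \<in> {x..y}")
    case True
    let ?e = "\<lambda>b. if y < b then 1 else (0::real)"
    have O: "WEx p {x..y} ?e (Suc (Suc n)) a = wst p a True * WEx p {x..y} ?e (Suc n) (Suc a) + wst p a False * WEx p {x..y} ?e (Suc n) (a - 1)"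
      using True by (rule WEx_Suc_in)
    have O2: "WEx p {x..y} ?e (Suc n) a = wst p a True * WEx p {x..y} ?e n (Suc a) + wst p a False * WEx p {x..y} ?e n (a - 1)"
      using True by (rule WEx_Suc_in)
    have O3: "WK p {x..y} {y} (Suc n) a = wst p a True * WK p {x..y} {y} n (Suc a) + wst p a False * WK p {x..y} {y} n (a - 1)"
      using True by (rule WK_Suc_in)
    show ?thesis unfolding O O2 O3 Suc.IH[of "Suc a"] Suc.IH[of "a - 1"]
      by (simp add: algebra_simps)
  qed (simp add: WEx_Suc_out WK_Suc_out del: atLeastAtMost_iff)
qed

lemma Z_ident:
  assumes g0: "\<And>b. b < x \<Longrightarrow> g b = 0"
  shows "a \<le> Suc y \<Longrightarrow> (\<Sum>b\<in>{x..y}. g b * WK p {x..y} {b} n a)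
      + g (Suc y) * WEx p {x..y} (\<lambda>b. if y < b then 1 else 0) n a = WEx p {x..y} g n a"
proof (induction n arbitrary: a)
  case 0
  show ?case
  proof (cases "a \<in> {x..y}")
    case True
    have "(\<Sum>b\<in>{x..y}. g b * WK p {x..y} {b} 0 a) = (\<Sum>b\<in>{x..y}. if b = a then g a else 0)"
      by (rule sum.cong) (auto simp: True)
    then show ?thesis using True by simp
  next
    case False
    then have "a < x \<or> a = Suc y" using 0 by auto
    then show ?thesis using False g0 by auto
  qed
next
  case (Suc n)
  show ?case
  proof (cases "a \<in> {x..y}")
    case True
    then have a1: "Suc a \<le> Suc y" "a - 1 \<le> Suc y" by auto
    have "(\<Sum>b\<in>{x..y}. g b * WK p {x..y} {b} (Suc n) a)
        = wst p a True * (\<Sum>b\<in>{x..y}. g b * WK p {x..y} {b} n (Suc a))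
          + wst p a False * (\<Sum>b\<in>{x..y}. g b * WK p {x..y} {b} n (a - 1))"
      using True by (simp add: WK_Suc_in sum.distrib sum_distrib_left algebra_simps del: atLeastAtMost_iff)
    have R: "WEx p {x..y} g (Suc n) a = wst p a True * WEx p {x..y} g n (Suc a) + wst p a False * WEx p {x..y} g n (a - 1)"
      using True by (rule WEx_Suc_in)
    have Q: "WEx p {x..y} (\<lambda>b. if y < b then 1 else 0) (Suc n) a
       = wst p a True * WEx p {x..y} (\<lambda>b. if y < b then 1 else 0) n (Suc a)
         + wst p a False * WEx p {x..y} (\<lambda>b. if y < b then 1 else 0) n (a - 1)"
      using True by (rule WEx_Suc_in)
    show ?thesis unfolding R Q \<open>(\<Sum>b\<in>{x..y}. g b * WK p {x..y} {b} (Suc n) a) = _\<close>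
      unfolding Suc.IH[OF a1(1), symmetric] Suc.IH[OF a1(2), symmetric]
      by (simp add: algebra_simps)
  next
    case False
    then have "a < x \<or> a = Suc y" using Suc by auto
    then show ?thesis using False g0 by (auto simp: WK_Suc_out WEx_Suc_out)
  qed
qed

lemma green_sums:
  assumes x1: "1 \<le> x" and xy: "x < y"
  shows "(\<lambda>j. p y * WK p {x..y} {y} j (Suc x)) sums (FF p (x - 1) (Suc x) / FF p (x - 1) (Suc y))"
proof -
  let ?m = "x - 1"
  let ?e = "\<lambda>b. if y < b then 1 else (0::real)"
  let ?Q = "\<lambda>n. WEx p {x..y} ?e n (Suc x)"
  let ?Z = "\<lambda>n. (\<Sum>b\<in>{x..y}. FF p ?m b * WK p {x..y} {b} n (Suc x))"
  have ps: "(\<Sum>j<n. p y * WK p {x..y} {y} j (Suc x)) = ?Q n" for n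
  proof -
    have "(\<Sum>j<n. p y * WK p {x..y} {y} j (Suc x)) = (\<Sum>j<n. ?Q (Suc j) - ?Q j)"
      by (simp add: Q_step del: WEx.simps)
    also have "\<dots> = ?Q n - ?Q 0" by (rule sum_lessThan_telescope)
    finally show ?thesis using xy by simp
  qed
  have Fy: "0 < FF p ?m (Suc y)"
    using FF_mono[of "Suc ?m" "Suc y" ?m] FF_Suc_m[of ?m] x1 xy by simp
  have harm: "WEx p {x..y} (FF p ?m) n (Suc x) = FF p ?m (Suc x)" for n
    by (rule WEx_harm) (rule FF_harm, use x1 in auto)
  have Zid: "?Z n + FF p ?m (Suc y) * ?Q n = FF p ?m (Suc x)" for n
    using Z_ident[where g="FF p ?m" and a="Suc x" and n=n and x=x and y=y] harm[of n] xy x1 by (simp add: FF_le)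
  have Z0: "?Z \<longlonglongrightarrow> 0"
  proof (rule tendsto_sandwich[where f="\<lambda>n. 0" and h="\<lambda>n. FF p ?m y * WK p {..y} UNIV n (Suc x)"])
    show "\<forall>\<^sub>F n in sequentially. 0 \<le> ?Z n"
      by (intro always_eventually allI sum_nonneg mult_nonneg_nonneg FF_nonneg WK_nonneg)
    show "\<forall>\<^sub>F n in sequentially. ?Z n \<le> FF p ?m y * WK p {..y} UNIV n (Suc x)"
    proof (intro always_eventually allI)
      fix n
      have "?Z n \<le> (\<Sum>b\<in>{x..y}. FF p ?m y * WK p {x..y} {b} n (Suc x))"
        by (intro sum_mono mult_right_mono FF_mono WK_nonneg) auto
      also have "\<dots> = FF p ?m y * WK p {x..y} UNIV n (Suc x)"
        by (simp add: sum_distrib_left[symmetric] WK_sum_singletons)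
      also have "\<dots> \<le> FF p ?m y * WK p {..y} UNIV n (Suc x)"
        by (intro mult_left_mono WK_mono_I FF_nonneg) auto
      finally show "?Z n \<le> FF p ?m y * WK p {..y} UNIV n (Suc x)" .
    qed
    show "(\<lambda>n. 0) \<longlonglongrightarrow> (0::real)" by simp
    show "(\<lambda>n. FF p ?m y * WK p {..y} UNIV n (Suc x)) \<longlonglongrightarrow> 0"
      using tendsto_mult[OF tendsto_const T_tendsto] by simp
  qed
  have "?Q n = (FF p ?m (Suc x) - ?Z n) / FF p ?m (Suc y)" for n
    using Zid[of n] Fy by (simp add: field_simps)
  moreover have "(\<lambda>n. (FF p ?m (Suc x) - ?Z n) / FF p ?m (Suc y)) \<longlonglongrightarrow> (FF p ?m (Suc x) - 0) / FF p ?m (Suc y)"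
    by (rule tendsto_divide[OF tendsto_diff[OF tendsto_const Z0] tendsto_const]) (use Fy in simp)
  ultimately show ?thesis unfolding sums_def ps by simp
qed

end


lemma trans_wstep: "trans_prob p c (wstep c b) = wst p c b"
  by (cases b) (auto simp: trans_prob_def wstep_def wst_def)

lemma wstep_neq: "wstep a True \<noteq> wstep a False"
  by (simp add: wstep_def)

lemma wpos_inj: "length bs = length bs' \<Longrightarrow> (\<forall>i\<le>length bs. wpos a bs i = wpos a bs' i) \<Longrightarrow> bs = bs'"
proof (induction bs arbitrary: a bs')
  case Nil then show ?case by simp
next
  case (Cons b bs)
  then obtain c cs where bs': "bs' = c # cs" by (cases bs') auto
  have "wpos a (b # bs) 1 = wpos a (c # cs) 1" using Cons.prems bs' by auto
  then have bc: "b = c" by (cases b; cases c) (auto simp: wpos_def wstep_def)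
  have "\<forall>i\<le>length bs. wpos (wstep a b) bs i = wpos (wstep a b) cs i"
  proof (intro allI impI)
    fix i assume "i \<le> length bs"
    then have "wpos a (b # bs) (Suc i) = wpos a (c # cs) (Suc i)" using Cons.prems bs' by auto
    then show "wpos (wstep a b) bs i = wpos (wstep a b) cs i" using bc by simp
  qed
  then have "bs = cs" using Cons.IH[of cs "wstep a b"] Cons.prems bs' by simp
  then show ?case using bc bs' by simp
qed

locale bdc = bdp2 +
  fixes M :: "'a measure" and X :: "nat \<Rightarrow> 'a \<Rightarrow> nat"
  assumes chain: "is_bd_chain M X p"
begin

sublocale prob_space M using chain by (simp add: is_bd_chain_def)

lemma measX[measurable]: "X k \<in> measurable M (count_space UNIV)"
  using chain by (simp add: is_bd_chain_def)

lemma cyl_meas: "xs \<noteq> [] \<Longrightarrow> measure M {\<omega> \<in> space M. \<forall>i < length xs. X i \<omega> = xs ! i}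
          = (if xs ! 0 = 0 then path_prob p xs else 0)"
  using chain by (simp add: is_bd_chain_def)

definition ev :: "((nat \<Rightarrow> nat) \<Rightarrow> bool) \<Rightarrow> 'a set" where
  "ev \<Phi> = {\<omega> \<in> space M. \<Phi> (\<lambda>i. X i \<omega>)}"

lemma cyl_sets: "{\<omega> \<in> space M. \<forall>i\<le>n. X i \<omega> = c i} \<in> sets M"
  by measurable

lemma ev_sets:
  assumes dep: "\<And>f g. (\<forall>i\<le>n. f i = g i) \<Longrightarrow> \<Phi> f = \<Phi> g"
  shows "ev \<Phi> \<in> sets M"
proof -
  let ?L = "{xs :: nat list. length xs = Suc n \<and> \<Phi> (\<lambda>i. xs ! min i n)}"
  have "ev \<Phi> = (\<Union>xs\<in>?L. {\<omega> \<in> space M. \<forall>i\<le>n. X i \<omega> = xs ! i})"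
  proof (intro equalityI subsetI)
    fix \<omega> assume w: "\<omega> \<in> ev \<Phi>"
    let ?xs = "map (\<lambda>i. X i \<omega>) [0..<Suc n]"
    have "\<Phi> (\<lambda>i. ?xs ! min i n) = \<Phi> (\<lambda>i. X i \<omega>)"
      by (rule dep) (auto simp: nth_map_upt min_def simp del: upt_Suc)
    then have "\<Phi> (\<lambda>i. ?xs ! min i n)" using w unfolding ev_def by blast
    then have "?xs \<in> ?L" by simp
    moreover have "\<omega> \<in> {\<omega> \<in> space M. \<forall>i\<le>n. X i \<omega> = ?xs ! i}"
      using w by (auto simp: ev_def nth_map_upt simp del: upt_Suc)
    ultimately show "\<omega> \<in> (\<Union>xs\<in>?L. {\<omega> \<in> space M. \<forall>i\<le>n. X i \<omega> = xs ! i})" by blast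
  next
    fix \<omega> assume "\<omega> \<in> (\<Union>xs\<in>?L. {\<omega> \<in> space M. \<forall>i\<le>n. X i \<omega> = xs ! i})"
    then obtain xs where xs: "xs \<in> ?L" "\<omega> \<in> space M" "\<forall>i\<le>n. X i \<omega> = xs ! i" by blast
    have "\<Phi> (\<lambda>i. X i \<omega>) = \<Phi> (\<lambda>i. xs ! min i n)"
      by (rule dep) (use xs in auto)
    then show "\<omega> \<in> ev \<Phi>" using xs by (simp add: ev_def)
  qed
  also have "\<dots> \<in> sets M"
    by (rule sets.countable_UN'') (auto intro: cyl_sets)
  finally show ?thesis .
qed

lemma path_prob_wpos: "path_prob p (map (wpos a bs) [0..<Suc (length bs)]) = wpw p a bs"
proof -
  have "path_prob p (map (wpos a bs) [0..<Suc (length bs)])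
      = (\<Prod>i<length bs. trans_prob p (wpos a bs i) (wpos a bs (Suc i)))"
    unfolding path_prob_def by (intro prod.cong) (auto simp: nth_map_upt simp del: upt_Suc)
  also have "\<dots> = (\<Prod>i<length bs. wst p (wpos a bs i) (bs ! i))"
    by (intro prod.cong) (auto simp: wpos_Suc trans_wstep)
  finally show ?thesis by (simp add: wpw_prod)
qed

lemma meas_ev:
  assumes dep: "\<And>f g. (\<forall>i\<le>n. f i = g i) \<Longrightarrow> \<Phi> f = \<Phi> g"
  shows "measure M (ev \<Phi>) = WE p n 0 \<Phi>"
proof -
  define cyl where "cyl bs = {\<omega> \<in> space M. \<forall>i\<le>n. X i \<omega> = wpos 0 bs i}" for bs
  have cs: "cyl bs \<in> sets M" for bs unfolding cyl_def by (rule cyl_sets)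
  have cm: "measure M (cyl bs) = wpw p 0 bs" if "bs \<in> LL n" for bs
  proof -
    have len: "length bs = n" using that by (simp add: LL_def)
    let ?xs = "map (wpos 0 bs) [0..<Suc n]"
    have "cyl bs = {\<omega> \<in> space M. \<forall>i < length ?xs. X i \<omega> = ?xs ! i}"
      by (auto simp: cyl_def nth_map_upt less_Suc_eq_le simp del: upt_Suc)
    then have "measure M (cyl bs) = (if ?xs ! 0 = 0 then path_prob p ?xs else 0)"
      using cyl_meas[of ?xs] by (simp del: upt_Suc)
    also have "\<dots> = wpw p 0 bs"
      using path_prob_wpos[of 0 bs] len by (simp add: nth_map_upt del: upt_Suc)
    finally show ?thesis .
  qed
  have disj: "disjoint_family_on cyl (LL n)"
    unfolding disjoint_family_on_def
  proof (intro ballI impI)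
    fix bs bs' assume "bs \<in> LL n" "bs' \<in> LL n" "bs \<noteq> bs'"
    then have "\<not> (\<forall>i\<le>length bs. wpos 0 bs i = wpos 0 bs' i)"
      using wpos_inj[of bs bs' 0] by (auto simp: LL_def)
    then obtain i where "i \<le> n" "wpos 0 bs i \<noteq> wpos 0 bs' i"
      using \<open>bs \<in> LL n\<close> by (auto simp: LL_def)
    then show "cyl bs \<inter> cyl bs' = {}" by (auto simp: cyl_def)
  qed
  let ?U = "\<Union>bs\<in>LL n. cyl bs"
  have Us: "?U \<in> sets M" by (intro sets.finite_UN) (auto intro: cs)
  have "measure M ?U = (\<Sum>bs\<in>LL n. measure M (cyl bs))"
    by (rule finite_measure_finite_Union) (auto intro: cs disj)
  also have "\<dots> = 1" using sum_wpw[of 0 n] by (simp add: cm)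
  finally have U1: "measure M ?U = 1" .
  let ?S = "LL n \<inter> {bs. \<Phi> (wpos 0 bs)}"
  have evU: "ev \<Phi> \<inter> ?U = (\<Union>bs\<in>?S. cyl bs)"
  proof (intro equalityI subsetI)
    fix \<omega> assume "\<omega> \<in> ev \<Phi> \<inter> ?U"
    then obtain bs where bs: "bs \<in> LL n" "\<omega> \<in> cyl bs" "\<Phi> (\<lambda>i. X i \<omega>)" by (auto simp: ev_def)
    have "\<Phi> (\<lambda>i. X i \<omega>) = \<Phi> (wpos 0 bs)" by (rule dep) (use bs in \<open>auto simp: cyl_def\<close>)
    then show "\<omega> \<in> (\<Union>bs\<in>?S. cyl bs)" using bs by auto
  next
    fix \<omega> assume "\<omega> \<in> (\<Union>bs\<in>?S. cyl bs)"
    then obtain bs where bs: "bs \<in> LL n" "\<omega> \<in> cyl bs" "\<Phi> (wpos 0 bs)" by auto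
    have "\<Phi> (\<lambda>i. X i \<omega>) = \<Phi> (wpos 0 bs)" by (rule dep) (use bs in \<open>auto simp: cyl_def\<close>)
    then show "\<omega> \<in> ev \<Phi> \<inter> ?U" using bs by (auto simp: ev_def cyl_def)
  qed
  have evs: "ev \<Phi> \<in> sets M" by (rule ev_sets[OF dep])
  have "measure M (ev \<Phi> \<inter> ?U) = (\<Sum>bs\<in>?S. measure M (cyl bs))"
    unfolding evU by (rule finite_measure_finite_Union) (auto intro: cs disjoint_family_on_mono[OF _ disj])
  also have "\<dots> = (\<Sum>bs\<in>?S. wpw p 0 bs)" by (rule sum.cong) (auto simp: cm)
  also have "\<dots> = WE p n 0 \<Phi>"
  proof -
    have "WE p n 0 \<Phi> = (\<Sum>bs\<in>LL n. if \<Phi> (wpos 0 bs) then wpw p 0 bs else 0)"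
      unfolding WE_def by (rule sum.cong) auto
    also have "\<dots> = sum (wpw p 0) {bs\<in>LL n. \<Phi> (wpos 0 bs)}" by (simp add: sum.inter_filter)
    also have "{bs\<in>LL n. \<Phi> (wpos 0 bs)} = ?S" by auto
    finally show ?thesis by simp
  qed
  finally have m1: "measure M (ev \<Phi> \<inter> ?U) = WE p n 0 \<Phi>" .
  have "measure M (ev \<Phi> - ?U) \<le> measure M (space M - ?U)"
    by (rule finite_measure_mono) (use evs Us sets.sets_into_space in auto)
  also have "\<dots> = 0" using prob_compl[OF Us] U1 by simp
  finally have m2: "measure M (ev \<Phi> - ?U) = 0" by (simp add: measure_nonneg antisym)
  have "measure M (ev \<Phi>) = measure M (ev \<Phi> \<inter> ?U) + measure M (ev \<Phi> - ?U)"
    using finite_measure_Diff'[OF evs Us] by simp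
  then show ?thesis using m1 m2 by simp
qed

end


definition Phi1 :: "nat \<Rightarrow> nat \<Rightarrow> (nat \<Rightarrow> nat) \<Rightarrow> bool" where
  "Phi1 x k f = ((\<forall>i\<le>k. f i \<in> {..x}) \<and> f k \<in> {x} \<and> f (Suc k) = Suc x)"

lemma Phi1_dep: "\<forall>i\<le>Suc k. f i = g i \<Longrightarrow> Phi1 x k f = Phi1 x k g"
  by (simp add: Phi1_def)

context bdc begin

lemma WE_one_up: "WE p 1 x (\<lambda>g. g 1 = Suc x) = p x"
  by (simp add: WE_def LL_1 wpos_def wstep_def wst_def)

lemma WE_Phi1: "WE p (Suc k) 0 (Phi1 x k) = WK p {..x} {x} k 0 * p x"
proof -
  have eq: "Phi1 x k = (\<lambda>f. (\<lambda>f. (\<forall>i\<le>k. f i \<in> {..x}) \<and> f k \<in> {x}) f \<and> (\<lambda>g. g 1 = Suc x) (\<lambda>i. f (k + i)))"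
    by (rule ext) (simp add: Phi1_def)
  have "WE p (Suc k) 0 (Phi1 x k) = WE p (k + 1) 0 (\<lambda>f. (\<lambda>f. (\<forall>i\<le>k. f i \<in> {..x}) \<and> f k \<in> {x}) f \<and> (\<lambda>g. g 1 = Suc x) (\<lambda>i. f (k + i)))"
    by (simp only: eq Suc_eq_plus1)
  also have "\<dots> = WE p k 0 (\<lambda>f. (\<forall>i\<le>k. f i \<in> {..x}) \<and> f k \<in> {x}) * WE p 1 x (\<lambda>g. g 1 = Suc x)"
    by (rule WE_split_const) auto
  also have "\<dots> = WK p {..x} {x} k 0 * p x"
    by (simp only: WE_K WE_one_up)
  finally show ?thesis .
qed

definition Cx :: "nat \<Rightarrow> nat \<Rightarrow> 'a set" where
  "Cx x k = {\<omega> \<in> space M. (\<forall>i\<le>k. X i \<omega> \<le> x) \<and> X k \<omega> = x \<and> X (Suc k) \<omega> = Suc x \<and> (\<forall>i>k. x \<le> X i \<omega>)}"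

definition CxN :: "nat \<Rightarrow> nat \<Rightarrow> nat \<Rightarrow> 'a set" where
  "CxN x k N = ev (\<lambda>f. Phi1 x k f \<and> (\<lambda>g. (\<forall>i\<le>N. g i \<in> {x..}) \<and> g N \<in> UNIV) (\<lambda>i. f (Suc k + i)))"

lemma CxN_dep: "\<forall>i\<le>Suc k + N. f i = g i \<Longrightarrow>
   (Phi1 x k f \<and> (\<lambda>g. (\<forall>i\<le>N. g i \<in> {x..}) \<and> g N \<in> UNIV) (\<lambda>i. f (Suc k + i)))
 = (Phi1 x k g \<and> (\<lambda>g. (\<forall>i\<le>N. g i \<in> {x..}) \<and> g N \<in> UNIV) (\<lambda>i. g (Suc k + i)))"
  by (auto simp: Phi1_def)

lemma CxN_sets: "CxN x k N \<in> sets M"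
  unfolding CxN_def by (rule ev_sets[OF CxN_dep])

lemma CxN_meas: "measure M (CxN x k N) = WK p {..x} {x} k 0 * p x * WK p {x..} UNIV N (Suc x)"
proof -
  have "measure M (CxN x k N) = WE p (Suc k + N) 0 (\<lambda>f. Phi1 x k f \<and> (\<lambda>g. (\<forall>i\<le>N. g i \<in> {x..}) \<and> g N \<in> UNIV) (\<lambda>i. f (Suc k + i)))"
    unfolding CxN_def by (rule meas_ev[OF CxN_dep])
  also have "\<dots> = WE p (Suc k) 0 (Phi1 x k) * WE p N (Suc x) (\<lambda>g. (\<forall>i\<le>N. g i \<in> {x..}) \<and> g N \<in> UNIV)"
    by (rule WE_split_const) (auto simp: Phi1_def)
  also have "\<dots> = WK p {..x} {x} k 0 * p x * WK p {x..} UNIV N (Suc x)"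
    by (simp only: WE_Phi1 WE_K)
  finally show ?thesis .
qed

lemma Cx_INT: "Cx x k = (\<Inter>N. CxN x k N)"
proof (intro equalityI subsetI)
  fix \<omega> assume "\<omega> \<in> Cx x k"
  then show "\<omega> \<in> (\<Inter>N. CxN x k N)" by (auto simp: Cx_def CxN_def ev_def Phi1_def)
next
  fix \<omega> assume w: "\<omega> \<in> (\<Inter>N. CxN x k N)"
  then have sp: "\<omega> \<in> space M" and P: "Phi1 x k (\<lambda>i. X i \<omega>)"
    by (auto simp: CxN_def ev_def)
  have "x \<le> X i \<omega>" if "k < i" for i
  proof -
    have "\<omega> \<in> CxN x k (i - Suc k)" using w by auto
    then have "\<forall>j\<le>i - Suc k. x \<le> X (Suc k + j) \<omega>" by (auto simp: CxN_def ev_def)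
    then show ?thesis using that by (metis le_refl add_Suc_right add_diff_inverse_nat not_less_eq add_Suc Suc_leI le_add_diff_inverse)
  qed
  then show "\<omega> \<in> Cx x k" using sp P by (auto simp: Cx_def Phi1_def)
qed

lemma Cx_sets: "Cx x k \<in> sets M"
  unfolding Cx_INT by (rule sets.countable_INT) (auto intro: CxN_sets)

lemma Cx_meas:
  assumes x1: "1 \<le> x"
  shows "measure M (Cx x k) = WK p {..x} {x} k 0 * p x * (FF p (x - 1) (Suc x) / Dinf p (x - 1))"
proof -
  have "(\<lambda>N. measure M (CxN x k N)) \<longlonglongrightarrow> measure M (\<Inter>N. CxN x k N)"
    by (rule finite_Lim_measure_decseq) (auto intro: CxN_sets simp: decseq_def CxN_def ev_def Phi1_def)
  moreover have "(\<lambda>N. measure M (CxN x k N)) \<longlonglongrightarrow> WK p {..x} {x} k 0 * p x * (FF p (x - 1) (Suc x) / Dinf p (x - 1))"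
    unfolding CxN_meas by (intro tendsto_mult_left S_lim) (use x1 in auto)
  ultimately show ?thesis unfolding Cx_INT by (rule LIMSEQ_unique)
qed

lemma Cx_disj: "disjoint_family (Cx x)"
  unfolding disjoint_family_on_def
proof (intro ballI impI)
  fix k k' :: nat assume "k \<noteq> k'"
  show "Cx x k \<inter> Cx x k' = {}"
  proof (cases "k < k'")
    case True
    then show ?thesis by (auto simp: Cx_def dest!: spec[of _ "Suc k"])
  next
    case False
    then have "k' < k" using \<open>k \<noteq> k'\<close> by simp
    then show ?thesis by (auto simp: Cx_def dest!: spec[of _ "Suc k'"])
  qed
qed

definition Acut :: "nat \<Rightarrow> 'a set" where
  "Acut x = {\<omega> \<in> space M. weak_cutpoint X x \<omega>}"

lemma Acut_sets: "Acut x \<in> sets M"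
proof -
  let ?G = "\<lambda>k N. ev (\<lambda>f. f k = x \<and> (\<forall>i<k. f i \<le> x) \<and> (\<forall>i. k < i \<and> i \<le> k + N \<longrightarrow> x \<le> f i))"
  have G: "?G k N \<in> sets M" for k N
    by (rule ev_sets[where n="k + N"]) auto
  have "Acut x = (\<Union>k. \<Inter>N. ?G k N)"
  proof (intro equalityI subsetI)
    fix \<omega> assume "\<omega> \<in> Acut x"
    then show "\<omega> \<in> (\<Union>k. \<Inter>N. ?G k N)" by (auto simp: Acut_def weak_cutpoint_def ev_def)
  next
    fix \<omega> assume "\<omega> \<in> (\<Union>k. \<Inter>N. ?G k N)"
    then obtain k where k: "\<forall>N. \<omega> \<in> ?G k N" by auto
    then have "\<omega> \<in> space M" "X k \<omega> = x" "\<forall>i<k. X i \<omega> \<le> x" by (auto simp: ev_def)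
    moreover have "\<forall>i>k. x \<le> X i \<omega>"
    proof (intro allI impI)
      fix i assume "k < i"
      have "\<omega> \<in> ?G k i" using k by auto
      then show "x \<le> X i \<omega>" using \<open>k < i\<close> by (auto simp: ev_def)
    qed
    ultimately show "\<omega> \<in> Acut x" by (auto simp: Acut_def weak_cutpoint_def)
  qed
  also have "\<dots> \<in> sets M"
    by (intro sets.countable_UN sets.countable_INT) (auto intro: G)
  finally show ?thesis .
qed

definition Bad :: "nat \<Rightarrow> nat \<Rightarrow> 'a set" where
  "Bad x k = ev (\<lambda>f. f k = x \<and> x \<le> f (Suc k) \<and> f (Suc k) \<noteq> Suc x)"

lemma Bad_sets: "Bad x k \<in> sets M"
  unfolding Bad_def by (rule ev_sets[where n="Suc k"]) auto

lemma Bad_meas: "1 \<le> x \<Longrightarrow> measure M (Bad x k) = 0"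
proof -
  assume x1: "1 \<le> x"
  have "measure M (Bad x k) = WE p (Suc k) 0 (\<lambda>f. f k = x \<and> x \<le> f (Suc k) \<and> f (Suc k) \<noteq> Suc x)"
    unfolding Bad_def by (rule meas_ev) auto
  also have "\<dots> = 0"
    unfolding WE_def
  proof (rule sum.neutral, intro ballI)
    fix bs assume "bs \<in> LL (Suc k)"
    then have "wpos 0 bs (Suc k) = wstep (wpos 0 bs k) (bs ! k)" by (intro wpos_Suc) (simp add: LL_def)
    then have "\<not> (wpos 0 bs k = x \<and> x \<le> wpos 0 bs (Suc k) \<and> wpos 0 bs (Suc k) \<noteq> Suc x)"
      using x1 by (auto simp: wstep_def)
    then show "wpw p 0 bs * (if wpos 0 bs k = x \<and> x \<le> wpos 0 bs (Suc k) \<and> wpos 0 bs (Suc k) \<noteq> Suc x then 1 else 0) = 0"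
      by (subst if_not_P) auto
  qed
  finally show ?thesis .
qed

lemma UBad_sets: "(\<Union>k. Bad x k) \<in> sets M"
  by (auto intro: Bad_sets)

lemma UBad_meas: "1 \<le> x \<Longrightarrow> measure M (\<Union>k. Bad x k) = 0"
proof -
  assume x1: "1 \<le> x"
  have "measure M (\<Union>k. Bad x k) \<le> (\<Sum>k. measure M (Bad x k))"
    by (rule finite_measure_subadditive_countably) (auto intro: Bad_sets simp: Bad_meas[OF x1])
  then show ?thesis using Bad_meas[OF x1] by (simp add: measure_nonneg antisym)
qed

lemma Cx_sub: "Cx x k \<subseteq> Acut x"
  by (auto simp: Cx_def Acut_def weak_cutpoint_def)

lemma Acut_sub: "Acut x \<subseteq> (\<Union>k. Cx x k) \<union> (\<Union>k. Bad x k)"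
proof
  fix \<omega> assume "\<omega> \<in> Acut x"
  then obtain k where w: "\<omega> \<in> space M" "X k \<omega> = x" "\<forall>i<k. X i \<omega> \<le> x" "\<forall>i>k. x \<le> X i \<omega>"
    by (auto simp: Acut_def weak_cutpoint_def)
  show "\<omega> \<in> (\<Union>k. Cx x k) \<union> (\<Union>k. Bad x k)"
  proof (cases "X (Suc k) \<omega> = Suc x")
    case True
    then have "\<omega> \<in> Cx x k" using w by (auto simp: Cx_def le_less)
    then show ?thesis by blast
  next
    case False
    then have "\<omega> \<in> Bad x k" using w by (auto simp: Bad_def ev_def)
    then show ?thesis by blast
  qed
qed

lemma sandwich_meas:
  assumes "B \<subseteq> A" "A \<subseteq> B \<union> N" "A \<in> sets M" "B \<in> sets M" "N \<in> sets M" "measure M N = 0"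
  shows "measure M A = measure M B"
proof -
  have "measure M B \<le> measure M A" using assms by (intro finite_measure_mono) auto
  moreover have "measure M A \<le> measure M (B \<union> N)" using assms by (intro finite_measure_mono) auto
  moreover have "measure M (B \<union> N) \<le> measure M B + measure M N"
    using assms by (intro measure_Un_le) auto
  ultimately show ?thesis using assms by simp
qed

lemma part1:
  assumes x1: "1 \<le> x"
  shows "measure M (Acut x) = 1 / (p x * Dinf p (x - 1))"
proof -
  let ?h = "FF p (x - 1) (Suc x) / Dinf p (x - 1)"
  have "(\<lambda>k. measure M (Cx x k)) sums measure M (\<Union>k. Cx x k)"
    by (rule finite_measure_UNION) (auto intro: Cx_sets Cx_disj)
  moreover have "(\<lambda>k. measure M (Cx x k)) sums (1 * ?h)"
  proof -
    have "(\<lambda>k. (p x * WK p {..x} {x} k 0) * ?h) sums (1 * ?h)"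
      by (rule sums_mult2[OF U_sums]) simp
    moreover have "(\<lambda>k. measure M (Cx x k)) = (\<lambda>k. (p x * WK p {..x} {x} k 0) * ?h)"
      by (rule ext) (simp only: Cx_meas[OF x1] ac_simps)
    ultimately show ?thesis by simp
  qed
  ultimately have U: "measure M (\<Union>k. Cx x k) = ?h" using sums_unique2 by force
  have "measure M (Acut x) = measure M (\<Union>k. Cx x k)"
    by (rule sandwich_meas[OF _ Acut_sub Acut_sets _ UBad_sets UBad_meas[OF x1]])
       (auto intro: Cx_sets dest: Cx_sub[THEN subsetD])
  also have "\<dots> = ?h" by (rule U)
  also have "FF p (x - 1) (Suc x) = 1 / p x"
  proof -
    obtain m where m: "x = Suc m" using x1 by (cases x) auto
    have "FF p m (Suc (Suc m)) = 1 + ww p (Suc m) / ww p m"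
      by (simp add: FF_Suc FF_Suc_m)
    also have "\<dots> = 1 + rho p (Suc m)" using ww_pos[of m] by (simp add: ww_Suc)
    also have "\<dots> = 1 / p (Suc m)" using p_pos[of "Suc m"] by (simp add: rho_def qq_def field_simps)
    finally show ?thesis using m by simp
  qed
  finally show ?thesis by simp
qed

end


definition Psi2 :: "nat \<Rightarrow> nat \<Rightarrow> nat \<Rightarrow> (nat \<Rightarrow> nat) \<Rightarrow> bool" where
  "Psi2 x y j g = ((\<forall>i\<le>j. g i \<in> {x..y}) \<and> g j \<in> {y} \<and> g (Suc j) = Suc y)"

lemma pred_both:
  assumes xy: "x < y"
  shows "(\<forall>N. Phi1 x k f \<and> Psi2 x y j (\<lambda>i. f (Suc k + i)) \<and> (\<forall>i\<le>N. y \<le> f (Suc k + (Suc j + i))))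
    \<longleftrightarrow> ((\<forall>i\<le>k. f i \<le> x) \<and> f k = x \<and> f (Suc k) = Suc x \<and> (\<forall>i>k. x \<le> f i))
      \<and> ((\<forall>i\<le>Suc k + j. f i \<le> y) \<and> f (Suc k + j) = y \<and> f (Suc (Suc k + j)) = Suc y \<and> (\<forall>i>Suc k + j. y \<le> f i))"
    (is "?L \<longleftrightarrow> ?R")
proof
  assume L: ?L
  then have P1: "Phi1 x k f" and P2: "Psi2 x y j (\<lambda>i. f (Suc k + i))" by auto
  have P3: "y \<le> f i" if "Suc k + j < i" for i
  proof -
    have "\<forall>t\<le>i. y \<le> f (Suc k + (Suc j + t))" using L by blast
    moreover have "i = Suc k + (Suc j + (i - Suc k - Suc j))" using that by simp
    ultimately show ?thesis by (metis le_add2 le_add_same_cancel1 add_leD2 diff_le_self)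
  qed
  have mid: "x \<le> f i \<and> f i \<le> y" if "k < i" "i \<le> Suc k + j" for i
  proof -
    have "i = Suc k + (i - Suc k)" "i - Suc k \<le> j" using that by auto
    then show ?thesis using P2 unfolding Psi2_def by (metis atLeastAtMost_iff)
  qed
  show ?R
  proof (intro conjI allI impI)
    show "\<And>i. i \<le> k \<Longrightarrow> f i \<le> x" using P1 by (auto simp: Phi1_def)
    show "f k = x" "f (Suc k) = Suc x" using P1 by (auto simp: Phi1_def)
    show "x \<le> f i" if "k < i" for i
    proof (cases "i \<le> Suc k + j")
      case True then show ?thesis using mid that by blast
    next
      case False
      then have "y \<le> f i" using P3 by simp
      then show ?thesis using xy by simp
    qed
    show "f i \<le> y" if "i \<le> Suc k + j" for i
    proof (cases "i \<le> k")
      case True then show ?thesis using P1 xy by (force simp: Phi1_def)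
    next
      case False then show ?thesis using mid that by simp
    qed
    show "f (Suc k + j) = y" "f (Suc (Suc k + j)) = Suc y" using P2 by (auto simp: Psi2_def)
    show "y \<le> f i" if "Suc k + j < i" for i using P3 that by blast
  qed
next
  assume R: ?R
  show ?L
  proof (intro allI)
    fix N
    have a: "Phi1 x k f" using R by (auto simp: Phi1_def)
    have b: "Psi2 x y j (\<lambda>i. f (Suc k + i))" using R unfolding Psi2_def by auto
    have c: "\<forall>i\<le>N. y \<le> f (Suc k + (Suc j + i))" using R by auto
    show "Phi1 x k f \<and> Psi2 x y j (\<lambda>i. f (Suc k + i)) \<and> (\<forall>i\<le>N. y \<le> f (Suc k + (Suc j + i)))"
      using a b c by blast
  qed
qed

context bdc begin

lemma WE_Psi2: "WE p (Suc j) (Suc x) (Psi2 x y j) = WK p {x..y} {y} j (Suc x) * p y"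
proof -
  have eq: "Psi2 x y j = (\<lambda>f. (\<lambda>f. (\<forall>i\<le>j. f i \<in> {x..y}) \<and> f j \<in> {y}) f \<and> (\<lambda>g. g 1 = Suc y) (\<lambda>i. f (j + i)))"
    by (rule ext) (simp add: Psi2_def)
  have "WE p (Suc j) (Suc x) (Psi2 x y j) = WE p (j + 1) (Suc x) (\<lambda>f. (\<lambda>f. (\<forall>i\<le>j. f i \<in> {x..y}) \<and> f j \<in> {y}) f \<and> (\<lambda>g. g 1 = Suc y) (\<lambda>i. f (j + i)))"
    by (simp only: eq Suc_eq_plus1)
  also have "\<dots> = WE p j (Suc x) (\<lambda>f. (\<forall>i\<le>j. f i \<in> {x..y}) \<and> f j \<in> {y}) * WE p 1 y (\<lambda>g. g 1 = Suc y)"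
    by (rule WE_split_const) auto
  also have "\<dots> = WK p {x..y} {y} j (Suc x) * p y"
    by (simp only: WE_K WE_one_up)
  finally show ?thesis .
qed

definition CCN :: "nat \<Rightarrow> nat \<Rightarrow> nat \<Rightarrow> nat \<Rightarrow> nat \<Rightarrow> 'a set" where
  "CCN x y k j N = ev (\<lambda>f. Phi1 x k f \<and> (\<lambda>g. Psi2 x y j g \<and> (\<lambda>h. (\<forall>i\<le>N. h i \<in> {y..}) \<and> h N \<in> UNIV) (\<lambda>i. g (Suc j + i))) (\<lambda>i. f (Suc k + i)))"

lemma CCN_dep: "\<forall>i\<le>Suc k + (Suc j + N). f i = g i \<Longrightarrow>
   (Phi1 x k f \<and> (\<lambda>g. Psi2 x y j g \<and> (\<lambda>h. (\<forall>i\<le>N. h i \<in> {y..}) \<and> h N \<in> UNIV) (\<lambda>i. g (Suc j + i))) (\<lambda>i. f (Suc k + i)))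
 = (Phi1 x k g \<and> (\<lambda>g. Psi2 x y j g \<and> (\<lambda>h. (\<forall>i\<le>N. h i \<in> {y..}) \<and> h N \<in> UNIV) (\<lambda>i. g (Suc j + i))) (\<lambda>i. g (Suc k + i)))"
  by (auto simp: Phi1_def Psi2_def)

lemma CCN_sets: "CCN x y k j N \<in> sets M"
  unfolding CCN_def by (rule ev_sets[OF CCN_dep])

lemma CCN_meas: "measure M (CCN x y k j N)
   = (WK p {..x} {x} k 0 * p x) * ((WK p {x..y} {y} j (Suc x) * p y) * WK p {y..} UNIV N (Suc y))"
proof -
  have "measure M (CCN x y k j N) = WE p (Suc k + (Suc j + N)) 0 (\<lambda>f. Phi1 x k f \<and> (\<lambda>g. Psi2 x y j g \<and> (\<lambda>h. (\<forall>i\<le>N. h i \<in> {y..}) \<and> h N \<in> UNIV) (\<lambda>i. g (Suc j + i))) (\<lambda>i. f (Suc k + i)))"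
    unfolding CCN_def by (rule meas_ev[OF CCN_dep])
  also have "\<dots> = WE p (Suc k) 0 (Phi1 x k) * WE p (Suc j + N) (Suc x) (\<lambda>g. Psi2 x y j g \<and> (\<lambda>h. (\<forall>i\<le>N. h i \<in> {y..}) \<and> h N \<in> UNIV) (\<lambda>i. g (Suc j + i)))"
    by (rule WE_split_const) (auto simp: Phi1_def)
  also have "WE p (Suc j + N) (Suc x) (\<lambda>g. Psi2 x y j g \<and> (\<lambda>h. (\<forall>i\<le>N. h i \<in> {y..}) \<and> h N \<in> UNIV) (\<lambda>i. g (Suc j + i)))
      = WE p (Suc j) (Suc x) (Psi2 x y j) * WE p N (Suc y) (\<lambda>h. (\<forall>i\<le>N. h i \<in> {y..}) \<and> h N \<in> UNIV)"
    by (rule WE_split_const) (auto simp: Psi2_def)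
  finally show ?thesis by (simp only: WE_Phi1 WE_Psi2 WE_K)
qed

lemma CC_INT: "x < y \<Longrightarrow> Cx x k \<inter> Cx y (Suc k + j) = (\<Inter>N. CCN x y k j N)"
proof -
  assume xy: "x < y"
  have "\<omega> \<in> Cx x k \<inter> Cx y (Suc k + j) \<longleftrightarrow> \<omega> \<in> (\<Inter>N. CCN x y k j N)" for \<omega>
  proof (cases "\<omega> \<in> space M")
    case True
    show ?thesis using True pred_both[OF xy, of k "\<lambda>i. X i \<omega>" j]
      by (simp add: CCN_def ev_def Cx_def)
  qed (auto simp: Cx_def CCN_def ev_def)
  then show ?thesis by blast
qed

lemma CC_meas:
  assumes x1: "1 \<le> x" and xy: "x < y"
  shows "measure M (Cx x k \<inter> Cx y (Suc k + j))
     = (WK p {..x} {x} k 0 * p x) * ((WK p {x..y} {y} j (Suc x) * p y) * (FF p (y - 1) (Suc y) / Dinf p (y - 1)))"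
proof -
  have "(\<lambda>N. measure M (CCN x y k j N)) \<longlonglongrightarrow> measure M (\<Inter>N. CCN x y k j N)"
  proof (rule finite_Lim_measure_decseq)
    show "range (CCN x y k j) \<subseteq> sets M" by (auto intro: CCN_sets)
    show "decseq (CCN x y k j)"
      by (rule decseq_SucI) (auto simp: CCN_def ev_def)
  qed
  moreover have "(\<lambda>N. measure M (CCN x y k j N)) \<longlonglongrightarrow> (WK p {..x} {x} k 0 * p x) * ((WK p {x..y} {y} j (Suc x) * p y) * (FF p (y - 1) (Suc y) / Dinf p (y - 1)))"
    unfolding CCN_meas by (intro tendsto_mult_left S_lim) (use x1 xy in auto)
  ultimately show ?thesis unfolding CC_INT[OF xy] by (rule LIMSEQ_unique)
qed

lemma CC_empty: "x < y \<Longrightarrow> k' \<le> k \<Longrightarrow> Cx x k \<inter> Cx y k' = {}"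
proof (cases "k' = k")
  case True
  assume "x < y" then show ?thesis using True by (auto simp: Cx_def)
next
  case False
  assume xy: "x < y" and kk: "k' \<le> k"
  then have "Suc k' \<le> k" using False by simp
  then show ?thesis using xy by (auto simp: Cx_def dest!: spec[of _ "Suc k'"])
qed

lemma part2:
  assumes x1: "1 \<le> x" and xy: "x < y"
  shows "measure M (Acut x \<inter> Acut y)
    = (FF p (x - 1) (Suc x) / FF p (x - 1) (Suc y)) * (FF p (y - 1) (Suc y) / Dinf p (y - 1))"
proof -
  let ?G = "FF p (x - 1) (Suc x) / FF p (x - 1) (Suc y)"
  let ?h = "FF p (y - 1) (Suc y) / Dinf p (y - 1)"
  let ?a = "\<lambda>k. WK p {..x} {x} k 0 * p x"
  define B where "B k = Cx x k \<inter> (\<Union>k'. Cx y k')" for k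
  have Bsets: "B k \<in> sets M" for k unfolding B_def by (auto intro: Cx_sets)
  have Bm: "measure M (B k) = ?a k * ?G * ?h" for k
  proof -
    let ?f = "\<lambda>k'. measure M (Cx x k \<inter> Cx y k')"
    have "?f sums measure M (\<Union>k'. Cx x k \<inter> Cx y k')"
    proof (rule finite_measure_UNION)
      show "range (\<lambda>k'. Cx x k \<inter> Cx y k') \<subseteq> sets M" by (auto intro: Cx_sets)
      show "disjoint_family (\<lambda>k'. Cx x k \<inter> Cx y k')"
        using Cx_disj[of y] unfolding disjoint_family_on_def by blast
    qed
    moreover have "(\<Union>k'. Cx x k \<inter> Cx y k') = B k" by (auto simp: B_def)
    moreover have "?f sums (?a k * ?G * ?h)"
    proof -
      have "(\<lambda>j. ?a k * (p y * WK p {x..y} {y} j (Suc x)) * ?h) sums (?a k * ?G * ?h)"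
        by (intro sums_mult2 sums_mult green_sums x1 xy)
      moreover have "(\<lambda>j. ?f (j + Suc k)) = (\<lambda>j. ?a k * (p y * WK p {x..y} {y} j (Suc x)) * ?h)"
        by (rule ext, subst add.commute, subst CC_meas[OF x1 xy]) (simp add: ac_simps)
      ultimately have "(\<lambda>j. ?f (j + Suc k)) sums (?a k * ?G * ?h)" by simp
      moreover have "(\<Sum>i<Suc k. ?f i) = 0"
        by (rule sum.neutral) (auto simp: CC_empty[OF xy])
      ultimately show ?thesis using sums_iff_shift[of ?f "Suc k" "?a k * ?G * ?h"] by simp
    qed
    ultimately show ?thesis using sums_unique2 by metis
  qed
  have "(\<lambda>k. measure M (B k)) sums measure M (\<Union>k. B k)"
  proof (rule finite_measure_UNION)
    show "range B \<subseteq> sets M" by (auto intro: Bsets)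
    show "disjoint_family B"
      using Cx_disj[of x] unfolding disjoint_family_on_def B_def by blast
  qed
  moreover have "(\<lambda>k. measure M (B k)) sums (1 * (?G * ?h))"
  proof -
    have "(\<lambda>k. (p x * WK p {..x} {x} k 0) * (?G * ?h)) sums (1 * (?G * ?h))"
      by (rule sums_mult2[OF U_sums]) simp
    moreover have "(\<lambda>k. measure M (B k)) = (\<lambda>k. (p x * WK p {..x} {x} k 0) * (?G * ?h))"
      by (rule ext) (simp only: Bm ac_simps)
    ultimately show ?thesis by simp
  qed
  ultimately have UB: "measure M (\<Union>k. B k) = ?G * ?h" using sums_unique2 by force
  have UBeq: "(\<Union>k. B k) = (\<Union>k. Cx x k) \<inter> (\<Union>k. Cx y k)" by (auto simp: B_def)
  have Nsets: "(\<Union>k. Bad x k) \<union> (\<Union>k. Bad y k) \<in> sets M" by (auto intro: Bad_sets)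
  have Nm: "measure M ((\<Union>k. Bad x k) \<union> (\<Union>k. Bad y k)) = 0"
  proof -
    have "measure M ((\<Union>k. Bad x k) \<union> (\<Union>k. Bad y k)) \<le> measure M (\<Union>k. Bad x k) + measure M (\<Union>k. Bad y k)"
      by (intro measure_Un_le UBad_sets)
    then show ?thesis using UBad_meas[OF x1] UBad_meas[of y] x1 xy by (simp add: measure_nonneg antisym)
  qed
  have "measure M (Acut x \<inter> Acut y) = measure M (\<Union>k. B k)"
  proof (rule sandwich_meas[OF _ _ _ _ Nsets Nm])
    show "(\<Union>k. B k) \<subseteq> Acut x \<inter> Acut y" unfolding UBeq using Cx_sub by blast
    show "Acut x \<inter> Acut y \<subseteq> (\<Union>k. B k) \<union> ((\<Union>k. Bad x k) \<union> (\<Union>k. Bad y k))"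
      unfolding UBeq using Acut_sub[of x] Acut_sub[of y] by blast
    show "Acut x \<inter> Acut y \<in> sets M" by (intro sets.Int Acut_sets)
    show "(\<Union>k. B k) \<in> sets M" by (auto intro: Bsets)
  qed
  then show ?thesis using UB by simp
qed

end


context bdp begin
lemma FF_Suc_self: "1 \<le> x \<Longrightarrow> FF p (x - 1) (Suc x) = 1 / p x"
proof -
  assume x1: "1 \<le> x"
  obtain m where m: "x = Suc m" using x1 by (cases x) auto
  have "FF p m (Suc (Suc m)) = 1 + ww p (Suc m) / ww p m"
    by (simp add: FF_Suc FF_Suc_m)
  also have "\<dots> = 1 + rho p (Suc m)" using ww_pos[of m] by (simp add: ww_Suc)
  also have "\<dots> = 1 / p (Suc m)" using p_pos[of "Suc m"] by (simp add: rho_def qq_def field_simps)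
  finally show ?thesis using m by simp
qed
end

context bdc begin

lemma final_alg:
  assumes x1: "1 \<le> x" and xy: "x < y"
  shows "(FF p (x - 1) (Suc x) / FF p (x - 1) (Suc y)) * (FF p (y - 1) (Suc y) / Dinf p (y - 1))
    = 1 / (p x * Dfin p (x - 1) y) * (1 / (1 - qq p y * Dfin p (x - 1) (y - 1) / Dfin p (x - 1) y)) * (1 / Dinf p (y - 1))"
proof -
  let ?m = "x - 1"
  obtain y' where y': "y = Suc y'" using xy by (cases y) auto
  have my': "?m \<le> y'" using xy y' by simp
  have e1: "Dfin p ?m y = FF p ?m y" using xy by (intro Dfin_FF) simp
  have e2: "Dfin p ?m (y - 1) = FF p ?m y'" using my' y' by (simp add: Dfin_FF)
  have fy: "FF p ?m (Suc y) = FF p ?m y + ww p y / ww p ?m" using xy by (intro FF_Suc) simp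
  have fy': "FF p ?m y = FF p ?m y' + ww p y' / ww p ?m" using my' y' by (simp add: FF_Suc)
  have harm: "p y * ww p y = qq p y * ww p y'" using ww_harm[of y'] y' by simp
  have key: "p y * FF p ?m (Suc y) = FF p ?m y - qq p y * FF p ?m y'"
  proof -
    have "p y * FF p ?m (Suc y) = p y * FF p ?m y + (p y * ww p y) / ww p ?m"
      using fy by (simp add: algebra_simps)
    also have "\<dots> = p y * FF p ?m y + qq p y * (ww p y' / ww p ?m)" by (simp add: harm)
    also have "\<dots> = p y * FF p ?m y + qq p y * (FF p ?m y - FF p ?m y')" using fy' by simp
    also have "\<dots> = FF p ?m y - qq p y * FF p ?m y'" by (simp add: qq_def algebra_simps)
    finally show ?thesis .
  qed
  have A: "0 < FF p ?m y"
    using FF_mono[of "Suc ?m" y ?m] FF_Suc_m[of ?m] x1 xy by simp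
  have F1: "0 < FF p ?m (Suc y)"
    using FF_mono[of y "Suc y" ?m] A by simp
  have P: "0 < p x" "0 < p y" by (rule p_pos)+
  have D: "0 < Dinf p (y - 1)" using Dinf_ge1[of "y - 1"] by simp
  have hx: "FF p ?m (Suc x) = 1 / p x" by (rule FF_Suc_self[OF x1])
  have hy: "FF p (y - 1) (Suc y) = 1 / p y" using x1 xy by (intro FF_Suc_self) simp
  have nz: "FF p ?m y - qq p y * FF p ?m y' \<noteq> 0" using key P F1 by (metis mult_pos_pos less_irrefl)
  have "1 - qq p y * FF p ?m y' / FF p ?m y = (FF p ?m y - qq p y * FF p ?m y') / FF p ?m y"
    using A by (simp add: field_simps)
  then have r: "1 - qq p y * FF p ?m y' / FF p ?m y = p y * FF p ?m (Suc y) / FF p ?m y"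
    using key by simp
  show ?thesis unfolding e1 e2 hx hy r
    using A F1 P D by (simp add: field_simps)
qed

end

theorem lemma7:
  fixes M :: "'a measure" and X :: "nat \<Rightarrow> 'a \<Rightarrow> nat" and p :: "nat \<Rightarrow> real"
  assumes p0: "p 0 = 1"
    and ppos: "\<And>k. k \<ge> 1 \<Longrightarrow> 0 < p k \<and> p k < 1"
    and chain: "is_bd_chain M X p"
    and D0fin: "convergent (\<lambda>n. Dfin p 0 n)"
  shows "(\<forall>x::nat. x \<ge> 1 \<longrightarrow>
            measure M {\<omega> \<in> space M. weak_cutpoint X x \<omega>}
              = 1 / (p x * Dinf p (x - 1)))
       \<and> (\<forall>x y::nat. 1 \<le> x \<and> x < y \<longrightarrow>
            measure M {\<omega> \<in> space M. weak_cutpoint X x \<omega> \<and> weak_cutpoint X y \<omega>}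
              = 1 / (p x * Dfin p (x - 1) y)
                * (1 / (1 - qq p y * Dfin p (x - 1) (y - 1) / Dfin p (x - 1) y))
                * (1 / Dinf p (y - 1)))"
proof -
  interpret bdc p M X
    using p0 ppos D0fin chain by unfold_locales auto
  show ?thesis
  proof (intro conjI allI impI)
    fix x :: nat assume x1: "x \<ge> 1"
    show "measure M {\<omega> \<in> space M. weak_cutpoint X x \<omega>} = 1 / (p x * Dinf p (x - 1))"
      using part1[OF x1] by (simp add: Acut_def)
  next
    fix x y :: nat assume xy: "1 \<le> x \<and> x < y"
    have eq: "{\<omega> \<in> space M. weak_cutpoint X x \<omega> \<and> weak_cutpoint X y \<omega>} = Acut x \<inter> Acut y"
      by (auto simp: Acut_def)
    show "measure M {\<omega> \<in> space M. weak_cutpoint X x \<omega> \<and> weak_cutpoint X y \<omega>}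
              = 1 / (p x * Dfin p (x - 1) y)
                * (1 / (1 - qq p y * Dfin p (x - 1) (y - 1) / Dfin p (x - 1) y))
                * (1 / Dinf p (y - 1))"
      unfolding eq using part2[of x y] final_alg[of x y] xy by simp
  qed
qed

end
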